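(* Let $\mathcal H$ be a separable complex Hilbert space and $S_2$ the Hilbert space of Hilbert–Schmidt operators on $\mathcal H$ with $\langle\eta,\tau\rangle_2=\operatorname{tr}(\eta^*\tau)$. If $A$ is a selfadjoint operator in $\mathcal B(S_2)$, then there exist selfadjoint operators $a_1,a_2,\ldots,b_1,b_2,\ldots\in\mathcal B(\mathcal H)$ such that $A\eta=\sum_n a_n\eta b_n$ for all $\eta\in S_2$. *)

theory Defs
  imports "HOL-Analysis.Analysis"
begin

class complex_vector = real_vector +
  fixes scaleC :: "complex \<Rightarrow> 'a \<Rightarrow> 'a"
  assumes scaleC_add_right: "scaleC c (x + y) = scaleC c x + scaleC c y"
    and scaleC_add_left: "scaleC (c + d) x = scaleC c x + scaleC d x"
    and scaleC_scaleC: "scaleC c (scaleC d x) = scaleC (c * d) x"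
    and scaleC_one: "scaleC 1 x = x"
    and scaleR_scaleC: "scaleR r x = scaleC (complex_of_real r) x"

class complex_inner = complex_vector + real_normed_vector +
  fixes cinner :: "'a \<Rightarrow> 'a \<Rightarrow> complex"
  assumes cinner_commute: "cinner x y = cnj (cinner y x)"
    and cinner_add_left: "cinner (x + y) z = cinner x z + cinner y z"
    and cinner_scaleC_left: "cinner (scaleC c x) y = cnj c * cinner x y"
    and cinner_Re_nonneg: "0 \<le> Re (cinner x x)"
    and cinner_eq_zero_iff: "cinner x x = 0 \<longleftrightarrow> x = 0"
    and norm_eq_sqrt_cinner: "norm x = sqrt (Re (cinner x x))"

class chilbert_space = complex_inner + complete_space

definition separable_space :: "'a::topological_space itself \<Rightarrow> bool" where
  "separable_space _ \<longleftrightarrow> (\<exists>D::'a set. countable D \<and> closure D = UNIV)"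

definition bounded_clinear_op :: "('a::complex_inner \<Rightarrow> 'a) \<Rightarrow> bool" where
  "bounded_clinear_op f \<longleftrightarrow>
     (\<forall>x y. f (x + y) = f x + f y) \<and> (\<forall>c x. f (scaleC c x) = scaleC c (f x)) \<and>
     (\<exists>K. \<forall>x. norm (f x) \<le> K * norm x)"

definition selfadjoint_op :: "('a::complex_inner \<Rightarrow> 'a) \<Rightarrow> bool" where
  "selfadjoint_op f \<longleftrightarrow> bounded_clinear_op f \<and> (\<forall>x y. cinner (f x) y = cinner x (f y))"

definition orthonormal_basis :: "'a::complex_inner set \<Rightarrow> bool" where
  "orthonormal_basis E \<longleftrightarrow>
     (\<forall>e\<in>E. cinner e e = 1) \<and> (\<forall>e\<in>E. \<forall>f\<in>E. e \<noteq> f \<longrightarrow> cinner e f = 0) \<and>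
     (\<forall>x. (\<forall>e\<in>E. cinner e x = 0) \<longrightarrow> x = 0)"

definition hilbert_schmidt :: "('a::complex_inner \<Rightarrow> 'a) \<Rightarrow> bool" where
  "hilbert_schmidt \<eta> \<longleftrightarrow> bounded_clinear_op \<eta> \<and>
     (\<exists>E. orthonormal_basis E \<and> (\<lambda>e. (norm (\<eta> e))\<^sup>2) summable_on E)"

definition S2 :: "('a::complex_inner \<Rightarrow> 'a) set" where
  "S2 = {\<eta>. hilbert_schmidt \<eta>}"

text \<open>\<open>\<langle>\<eta>,\<tau>\<rangle>\<^sub>2 = tr(\<eta>\<^sup>*\<tau>) = \<Sum>\<^sub>e \<langle>e, \<eta>\<^sup>*\<tau> e\<rangle> = \<Sum>\<^sub>e \<langle>\<eta> e, \<tau> e\<rangle>\<close>, computed in a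
  (fixed, arbitrarily chosen) orthonormal basis.\<close>
definition hs_inner :: "('a::complex_inner \<Rightarrow> 'a) \<Rightarrow> ('a \<Rightarrow> 'a) \<Rightarrow> complex" where
  "hs_inner \<eta> \<tau> = (\<Sum>\<^sub>\<infinity>e\<in>(SOME E. orthonormal_basis E). cinner (\<eta> e) (\<tau> e))"

definition hs_norm :: "('a::complex_inner \<Rightarrow> 'a) \<Rightarrow> real" where
  "hs_norm \<eta> = sqrt (Re (hs_inner \<eta> \<eta>))"

definition selfadjoint_on_S2 :: "(('a::complex_inner \<Rightarrow> 'a) \<Rightarrow> ('a \<Rightarrow> 'a)) \<Rightarrow> bool" where
  "selfadjoint_on_S2 A \<longleftrightarrow>
     (\<forall>\<eta>\<in>S2. A \<eta> \<in> S2) \<and>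
     (\<forall>\<eta>\<in>S2. \<forall>\<tau>\<in>S2. A (\<lambda>x. \<eta> x + \<tau> x) = (\<lambda>x. A \<eta> x + A \<tau> x)) \<and>
     (\<forall>c. \<forall>\<eta>\<in>S2. A (\<lambda>x. scaleC c (\<eta> x)) = (\<lambda>x. scaleC c (A \<eta> x))) \<and>
     (\<exists>K. \<forall>\<eta>\<in>S2. hs_norm (A \<eta>) \<le> K * hs_norm \<eta>) \<and>
     (\<forall>\<eta>\<in>S2. \<forall>\<tau>\<in>S2. hs_inner (A \<eta>) \<tau> = hs_inner \<eta> (A \<tau>))"

end

theory Submission
  imports Defs
begin

lemma scaleC_zero_right[simp]: "scaleC c (0::'a::complex_vector) = 0"
proof -
  have "scaleC c (0::'a) = scaleC c 0 + scaleC c 0" using scaleC_add_right[of c 0 0] by simp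
  thus ?thesis by simp
qed
lemma scaleC_zero_left[simp]: "scaleC 0 (x::'a::complex_vector) = 0"
  using scaleR_scaleC[of 0 x] by simp
lemma scaleC_minus_right: "scaleC c (- x) = - scaleC c (x::'a::complex_vector)"
proof -
  have "scaleC c (- x) + scaleC c x = 0" by (simp add: scaleC_add_right[symmetric])
  thus ?thesis by (simp add: eq_neg_iff_add_eq_0)
qed
lemma scaleC_diff_right: "scaleC c (x - y) = scaleC c x - scaleC c (y::'a::complex_vector)"
  using scaleC_add_right[of c x "-y"] by (simp add: scaleC_minus_right)
lemma scaleC_minus_left: "scaleC (- c) x = - scaleC c (x::'a::complex_vector)"
proof -
  have "scaleC (- c) x + scaleC c x = 0" by (simp add: scaleC_add_left[symmetric])
  thus ?thesis by (simp add: eq_neg_iff_add_eq_0)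
qed
lemma scaleC_diff_left: "scaleC (c - d) x = scaleC c x - scaleC d (x::'a::complex_vector)"
  using scaleC_add_left[of c "-d" x] by (simp add: scaleC_minus_left)
lemma scaleC_sum_right: "scaleC c (sum f A) = sum (\<lambda>a. scaleC c (f a :: 'a::complex_vector)) A"
  by (induction A rule: infinite_finite_induct) (auto simp: scaleC_add_right)
lemma scaleC_sum_left: "scaleC (sum f A) (x::'a::complex_vector) = sum (\<lambda>a. scaleC (f a) x) A"
  by (induction A rule: infinite_finite_induct) (auto simp: scaleC_add_left)
lemma scaleC_of_real: "scaleC (of_real r) (x::'a::complex_vector) = scaleR r x"
  by (simp add: scaleR_scaleC)

lemma cinner_add_right: "cinner (x::'a::complex_inner) (y + z) = cinner x y + cinner x z"
  by (metis cinner_add_left cinner_commute complex_cnj_add)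
lemma cinner_scaleC_right: "cinner (x::'a::complex_inner) (scaleC c y) = c * cinner x y"
  by (metis cinner_commute cinner_scaleC_left complex_cnj_cnj complex_cnj_mult)
lemma cinner_zero_left[simp]: "cinner (0::'a::complex_inner) y = 0"
proof -
  have "cinner (0 + 0::'a) y = cinner 0 y + cinner 0 y" by (rule cinner_add_left)
  thus ?thesis by simp
qed
lemma cinner_zero_right[simp]: "cinner (x::'a::complex_inner) 0 = 0"
  by (metis cinner_commute cinner_zero_left complex_cnj_zero)
lemma cinner_minus_left: "cinner (- x) y = - cinner (x::'a::complex_inner) y"
proof -
  have "cinner (- x) y + cinner x y = 0" by (simp add: cinner_add_left[symmetric])
  thus ?thesis by (simp add: add_eq_0_iff)
qed
lemma cinner_minus_right: "cinner (x::'a::complex_inner) (- y) = - cinner x y"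
  by (metis cinner_commute cinner_minus_left complex_cnj_minus)
lemma cinner_diff_left: "cinner (x - y) z = cinner x z - cinner (y::'a::complex_inner) z"
  using cinner_add_left[of x "-y" z] by (simp add: cinner_minus_left)
lemma cinner_diff_right: "cinner (x::'a::complex_inner) (y - z) = cinner x y - cinner x z"
  using cinner_add_right[of x y "-z"] by (simp add: cinner_minus_right)
lemma cinner_sum_left: "cinner (sum f A) (y::'a::complex_inner) = (\<Sum>a\<in>A. cinner (f a) y)"
  by (induction A rule: infinite_finite_induct) (auto simp: cinner_add_left)
lemma cinner_sum_right: "cinner (x::'a::complex_inner) (sum f A) = (\<Sum>a\<in>A. cinner x (f a))"
  by (induction A rule: infinite_finite_induct) (auto simp: cinner_add_right)
lemma cinner_self_real: "cinner x x = of_real ((norm (x::'a::complex_inner))^2)"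
proof -
  have h: "cinner x x = cnj (cinner x x)" by (rule cinner_commute)
  have "Im (cinner x x) = Im (cnj (cinner x x))" using h by (rule arg_cong)
  hence "Im (cinner x x) = 0" by simp
  moreover have "Re (cinner x x) = (norm x)^2"
    using norm_eq_sqrt_cinner[of x] cinner_Re_nonneg[of x] by simp
  ultimately show ?thesis by (simp add: complex_eq_iff)
qed
lemma norm_sq_cinner: "(norm x)^2 = Re (cinner x (x::'a::complex_inner))"
  by (simp add: cinner_self_real)
lemma cmod_cinner_self: "cmod (cinner x x) = (norm (x::'a::complex_inner))^2"
  by (simp add: cinner_self_real norm_power)
lemma norm_scaleC: "norm (scaleC c x) = cmod c * norm (x::'a::complex_inner)"
proof -
  have "(norm (scaleC c x))^2 = Re (cinner (scaleC c x) (scaleC c x))" by (rule norm_sq_cinner)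
  also have "cinner (scaleC c x) (scaleC c x) = (cnj c * c) * cinner x x"
    by (simp add: cinner_scaleC_left cinner_scaleC_right mult.assoc)
  also have "cnj c * c = of_real ((cmod c)^2)"
    unfolding complex_norm_square by (rule mult.commute)
  also have "Re (of_real ((cmod c)^2) * cinner x x) = (cmod c)^2 * (norm x)^2"
    by (simp add: cinner_self_real)
  finally have "(norm (scaleC c x))^2 = (cmod c * norm x)^2" by (simp add: power_mult_distrib)
  thus ?thesis by (simp add: power2_eq_iff_nonneg)
qed

lemma cauchy_schwarz: "cmod (cinner x y) \<le> norm x * norm (y::'a::complex_inner)"
proof (cases "y = 0")
  case True thus ?thesis by simp
next
  case False
  hence ny: "norm y > 0" by simp
  define t where "t = cinner y x / of_real ((norm y)^2)"
  define z where "z = x - scaleC t y"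
  have yy: "cinner y y = of_real ((norm y)^2)" by (rule cinner_self_real)
  have "cinner z z = cinner x x - t * cinner x y - cnj t * cinner y x + cnj t * t * cinner y y"
    unfolding z_def by (simp add: cinner_diff_left cinner_diff_right cinner_scaleC_left
        cinner_scaleC_right algebra_simps)
  also have "cnj t * t * cinner y y = cnj t * cinner y x"
    using ny by (simp add: t_def yy power2_eq_square)
  finally have zz: "cinner z z = cinner x x - t * cinner x y" by simp
  have "t * cinner x y = cinner y x * cinner x y / of_real ((norm y)^2)"
    unfolding t_def by simp
  also have "cinner y x * cinner x y = of_real ((cmod (cinner x y))^2)"
    unfolding complex_norm_square cinner_commute[of y x] by (simp only: mult.commute)
  finally have tcx: "t * cinner x y = of_real ((cmod (cinner x y))^2 / (norm y)^2)" by simp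
  have "Re (cinner z z) = Re (cinner x x) - Re (t * cinner x y)" using zz by simp
  also have "Re (t * cinner x y) = (cmod (cinner x y))^2 / (norm y)^2"
    by (simp only: tcx Re_complex_of_real)
  also have "Re (cinner x x) = (norm x)^2" by (rule norm_sq_cinner[symmetric])
  finally have "0 \<le> (norm x)^2 - (cmod (cinner x y))^2 / (norm y)^2"
    using cinner_Re_nonneg[of z] by simp
  hence "(cmod (cinner x y))^2 / (norm y)^2 \<le> (norm x)^2" by linarith
  hence "(cmod (cinner x y))^2 \<le> (norm x)^2 * (norm y)^2"
    using ny by (simp add: pos_divide_le_eq)
  hence "(cmod (cinner x y))^2 \<le> (norm x * norm y)^2" by (simp add: power_mult_distrib)
  thus ?thesis by (meson abs_le_square_iff abs_of_nonneg mult_nonneg_nonneg norm_ge_zero power2_le_imp_le)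
qed

lemma bounded_linear_cinner_right: "bounded_linear (cinner (x::'a::complex_inner))"
proof
  show "cinner x (a + b) = cinner x a + cinner x b" for a b by (rule cinner_add_right)
  show "cinner x (scaleR r a) = scaleR r (cinner x a)" for r a
    by (simp add: scaleR_scaleC cinner_scaleC_right scaleR_conv_of_real)
  show "\<exists>K. \<forall>a. norm (cinner x a) \<le> norm a * K"
    using cauchy_schwarz[of x] by (metis mult.commute)
qed


lemma cnj_mult_self: "cnj z * z = of_real ((cmod z)^2)"
  unfolding complex_norm_square by (rule mult.commute)
lemma mult_cnj_self: "z * cnj z = of_real ((cmod z)^2)"
  unfolding complex_norm_square by (rule refl)

lemma onb_inner:
  assumes "orthonormal_basis E" "e \<in> E" "f \<in> E"
  shows "cinner e f = (if e = f then 1 else 0)"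
  using assms unfolding orthonormal_basis_def by auto

lemma onb_complete:
  assumes "orthonormal_basis E" "\<And>e. e \<in> E \<Longrightarrow> cinner e x = 0"
  shows "x = 0"
  using assms unfolding orthonormal_basis_def by auto

lemma cinner_combo:
  fixes E :: "'a::complex_inner set"
  assumes "orthonormal_basis E" "finite F" "F \<subseteq> E" "f \<in> E"
  shows "cinner f (\<Sum>e\<in>F. scaleC (c e) e) = (if f \<in> F then c f else 0)"
proof -
  have "cinner f (\<Sum>e\<in>F. scaleC (c e) e) = (\<Sum>e\<in>F. c e * cinner f e)"
    by (simp add: cinner_sum_right cinner_scaleC_right)
  also have "\<dots> = (\<Sum>e\<in>F. if e = f then c e else 0)"
    using assms by (intro sum.cong) (auto simp: onb_inner)
  also have "\<dots> = (if f \<in> F then c f else 0)"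
    using assms(2) by (simp add: sum.delta')
  finally show ?thesis .
qed

lemma cinner_combo_self:
  fixes E :: "'a::complex_inner set"
  assumes "orthonormal_basis E" "finite F" "F \<subseteq> E"
  shows "cinner (\<Sum>e\<in>F. scaleC (c e) e) (\<Sum>e\<in>F. scaleC (c e) e) = of_real (\<Sum>e\<in>F. (cmod (c e))^2)"
proof -
  have "cinner (\<Sum>e\<in>F. scaleC (c e) e) (\<Sum>e\<in>F. scaleC (c e) e)
      = (\<Sum>f\<in>F. cnj (c f) * cinner f (\<Sum>e\<in>F. scaleC (c e) e))"
    by (simp add: cinner_sum_left cinner_scaleC_left)
  also have "\<dots> = (\<Sum>f\<in>F. cnj (c f) * c f)"
  proof (rule sum.cong[OF refl])
    fix f assume "f \<in> F"
    hence "f \<in> E" using assms by auto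
    thus "cnj (c f) * cinner f (\<Sum>e\<in>F. scaleC (c e) e) = cnj (c f) * c f"
      using cinner_combo[OF assms \<open>f \<in> E\<close>] \<open>f \<in> F\<close> by simp
  qed
  also have "\<dots> = (\<Sum>f\<in>F. of_real ((cmod (c f))^2))"
    by (simp only: cnj_mult_self)
  finally show ?thesis by simp
qed

lemma norm_combo_sq:
  fixes E :: "'a::complex_inner set"
  assumes "orthonormal_basis E" "finite F" "F \<subseteq> E"
  shows "(norm (\<Sum>e\<in>F. scaleC (c e) e))^2 = (\<Sum>e\<in>F. (cmod (c e))^2)"
  using cinner_combo_self[OF assms, of c] by (simp add: norm_sq_cinner)

lemma bessel_finite:
  fixes E :: "'a::complex_inner set"
  assumes "orthonormal_basis E" "finite F" "F \<subseteq> E"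
  shows "(\<Sum>e\<in>F. (cmod (cinner e x))^2) \<le> (norm x)^2"
proof -
  define p where "p = (\<Sum>e\<in>F. scaleC (cinner e x) e)"
  define S where "S = (\<Sum>e\<in>F. (cmod (cinner e x))^2)"
  have px: "cinner p x = of_real S"
  proof -
    have "cinner p x = (\<Sum>e\<in>F. cnj (cinner e x) * cinner e x)"
      unfolding p_def by (simp add: cinner_sum_left cinner_scaleC_left)
    also have "\<dots> = (\<Sum>e\<in>F. of_real ((cmod (cinner e x))^2))" by (simp only: cnj_mult_self)
    finally show ?thesis unfolding S_def by simp
  qed
  have xp: "cinner x p = of_real S"
    using px cinner_commute[of x p] by simp
  have pp: "cinner p p = of_real S"
    unfolding p_def S_def by (rule cinner_combo_self[OF assms])
  have "cinner (x - p) (x - p) = cinner x x - cinner x p - cinner p x + cinner p p"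
    by (simp add: cinner_diff_left cinner_diff_right)
  also have "\<dots> = cinner x x - of_real S" using px xp pp by simp
  finally have "0 \<le> Re (cinner x x - of_real S)" using cinner_Re_nonneg[of "x - p"] by simp
  thus ?thesis unfolding S_def by (simp add: norm_sq_cinner)
qed

definition exh :: "'a set \<Rightarrow> nat \<Rightarrow> 'a set" where
  "exh E N = from_nat_into E ` {..<N} \<inter> E"

lemma exh_finite[simp]: "finite (exh E N)"
  unfolding exh_def by simp
lemma exh_subset: "exh E N \<subseteq> E"
  unfolding exh_def by simp
lemma exh_mono: "N \<le> M \<Longrightarrow> exh E N \<subseteq> exh E M"
  unfolding exh_def by auto
lemma exh_cover:
  assumes "countable E" "e \<in> E"
  shows "e \<in> exh E (Suc (to_nat_on E e))"
  unfolding exh_def using assms from_nat_into_to_nat_on[OF assms] by force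
lemma exh_finite_subset:
  assumes "countable E" "finite F" "F \<subseteq> E"
  shows "\<exists>N. \<forall>M\<ge>N. F \<subseteq> exh E M"
proof -
  define N where "N = Suc (Max (insert 0 (to_nat_on E ` F)))"
  have "F \<subseteq> exh E M" if "M \<ge> N" for M
  proof
    fix e assume e: "e \<in> F"
    hence "to_nat_on E e \<le> Max (insert 0 (to_nat_on E ` F))" using assms(2) by simp
    hence "Suc (to_nat_on E e) \<le> M" using that N_def by simp
    thus "e \<in> exh E M" using exh_mono[of "Suc (to_nat_on E e)" M E] exh_cover[OF assms(1), of e] e assms(3) by blast
  qed
  thus ?thesis by blast
qed

lemma filterlim_exh:
  assumes "countable E"
  shows "filterlim (exh E) (finite_subsets_at_top E) sequentially"
  unfolding filterlim_def le_filter_def eventually_filtermap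
proof (intro allI impI)
  fix P assume "eventually P (finite_subsets_at_top E)"
  then obtain X where X: "finite X" "X \<subseteq> E" and XP: "\<forall>Y. finite Y \<and> X \<subseteq> Y \<and> Y \<subseteq> E \<longrightarrow> P Y"
    unfolding eventually_finite_subsets_at_top by blast
  obtain N where N: "\<forall>M\<ge>N. X \<subseteq> exh E M" using exh_finite_subset[OF assms X(1,2)] by blast
  show "eventually (\<lambda>N. P (exh E N)) sequentially"
    unfolding eventually_sequentially
  proof (intro exI allI impI)
    fix M assume "N \<le> M"
    hence "X \<subseteq> exh E M" using N by blast
    thus "P (exh E M)" using XP[rule_format, of "exh E M"] exh_subset[of E M] by simp
  qed
qed

lemma has_sum_exh:
  assumes "countable E" "(f has_sum s) E"
  shows "(\<lambda>N. sum f (exh E N)) \<longlonglongrightarrow> s"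
proof -
  have "(sum f \<longlongrightarrow> s) (finite_subsets_at_top E)" using assms(2) unfolding has_sum_def .
  from filterlim_compose[OF this filterlim_exh[OF assms(1)]]
  show ?thesis by simp
qed

lemma bessel_summable:
  fixes E :: "'a::complex_inner set"
  assumes "orthonormal_basis E"
  shows "(\<lambda>e. (cmod (cinner e x))^2) summable_on E"
    and "infsum (\<lambda>e. (cmod (cinner e x))^2) E \<le> (norm x)^2"
proof -
  have b: "bdd_above (sum (\<lambda>e. (cmod (cinner e x))^2) ` {F. F \<subseteq> E \<and> finite F})"
    using bessel_finite[OF assms] by (auto intro!: bdd_aboveI)
  show S: "(\<lambda>e. (cmod (cinner e x))^2) summable_on E"
    apply (rule nonneg_bdd_above_summable_on)
     apply simp
    using b apply (simp add: conj_commute)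
    done
  show "infsum (\<lambda>e. (cmod (cinner e x))^2) E \<le> (norm x)^2"
    by (rule infsum_le_finite_sums[OF S]) (auto simp: bessel_finite[OF assms])
qed


lemma norm_diff_onb:
  fixes E :: "'a::complex_inner set"
  assumes "orthonormal_basis E" "e \<in> E" "f \<in> E" "e \<noteq> f"
  shows "norm (e - f) > 1"
proof -
  have "cinner (e - f) (e - f) = cinner e e - cinner e f - cinner f e + cinner f f"
    by (simp add: cinner_diff_left cinner_diff_right)
  also have "\<dots> = 2" using assms onb_inner[OF assms(1)] by auto
  finally have "(norm (e - f))^2 = 2" by (simp add: norm_sq_cinner)
  thus ?thesis
    by (metis less_one not_le numeral_le_one_iff one_power2 power_mono semiring_norm(69) norm_ge_zero
        numeral_One)
qed

lemma onb_countable: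
  fixes E :: "'a::complex_inner set"
  assumes sep: "separable_space TYPE('a)" and onb: "orthonormal_basis E"
  shows "countable E"
proof -
  obtain D :: "'a set" where D: "countable D" "closure D = UNIV"
    using sep unfolding separable_space_def by blast
  have "\<forall>e\<in>E. \<exists>d\<in>D. dist d e < 1/2"
  proof
    fix e assume "e \<in> E"
    have "e \<in> closure D" using D by simp
    hence "\<forall>\<epsilon>>0. \<exists>d\<in>D. dist d e < \<epsilon>" unfolding closure_approachable .
    hence "0 < (1/2::real) \<longrightarrow> (\<exists>d\<in>D. dist d e < 1/2)" by (rule spec)
    thus "\<exists>d\<in>D. dist d e < 1/2" by simp
  qed
  then obtain g where g: "\<And>e. e \<in> E \<Longrightarrow> g e \<in> D \<and> dist (g e) e < 1/2" by metis
  have inj: "inj_on g E"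
  proof (rule inj_onI, rule ccontr)
    fix e f assume ef: "e \<in> E" "f \<in> E" "g e = g f" "e \<noteq> f"
    have "dist e f \<le> dist e (g e) + dist (g f) f" using ef(3) dist_triangle[of e f "g e"]
      by (simp add: dist_commute)
    also have "\<dots> < 1" using g[OF ef(1)] g[OF ef(2)] by (simp add: dist_commute)
    finally have "norm (e - f) < 1" by (simp add: dist_norm)
    thus False using norm_diff_onb[OF onb ef(1,2,4)] by simp
  qed
  have "countable (g ` E)" using g by (intro countable_subset[OF _ D(1)]) auto
  thus ?thesis using countable_image_inj_on inj by blast
qed

lemma onb_vector:
  fixes E :: "'a::chilbert_space set"
  assumes onb: "orthonormal_basis E" and cE: "countable E"
    and hs: "((\<lambda>e. (cmod (c e))^2) has_sum s) E"
  shows "\<exists>v. (\<lambda>N. \<Sum>e\<in>exh E N. scaleC (c e) e) \<longlonglongrightarrow> v \<and> (\<forall>e\<in>E. cinner e v = c e) \<and> (norm v)^2 = s"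
proof -
  define y where "y N = (\<Sum>e\<in>exh E N. scaleC (c e) e)" for N
  define a where "a N = (\<Sum>e\<in>exh E N. (cmod (c e))^2)" for N
  have a_lim: "a \<longlonglongrightarrow> s" unfolding a_def using has_sum_exh[OF cE hs] by simp
  have ya: "(norm (y N))^2 = a N" for N
    unfolding y_def a_def by (rule norm_combo_sq[OF onb exh_finite exh_subset])
  have diff: "(norm (y M - y N))^2 = a M - a N" if "N \<le> M" for M N
  proof -
    have sub: "exh E N \<subseteq> exh E M" using exh_mono[OF that] .
    have "y M - y N = (\<Sum>e\<in>exh E M - exh E N. scaleC (c e) e)"
      unfolding y_def by (simp add: sum_diff[OF exh_finite sub])
    hence "(norm (y M - y N))^2 = (\<Sum>e\<in>exh E M - exh E N. (cmod (c e))^2)"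
      using norm_combo_sq[OF onb, of "exh E M - exh E N" c] exh_subset[of E M] by auto
    also have "\<dots> = a M - a N" unfolding a_def by (simp add: sum_diff[OF exh_finite sub])
    finally show ?thesis .
  qed
  have diff2: "(norm (y M - y N))^2 = \<bar>a M - a N\<bar>" for M N
  proof (cases "N \<le> M")
    case True
    thus ?thesis using diff[OF True] by (metis abs_of_nonneg zero_le_power2)
  next
    case False
    hence "M \<le> N" by simp
    thus ?thesis using diff[of M N] by (metis abs_minus_commute abs_of_nonneg norm_minus_commute zero_le_power2)
  qed
  have "Cauchy a" using a_lim by (rule LIMSEQ_imp_Cauchy)
  have "Cauchy y"
  proof (rule metric_CauchyI)
    fix \<epsilon> :: real assume "\<epsilon> > 0"
    hence "\<epsilon>^2 > 0" by simp
    then obtain M where M: "\<And>m n. m \<ge> M \<Longrightarrow> n \<ge> M \<Longrightarrow> dist (a m) (a n) < \<epsilon>^2"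
      using \<open>Cauchy a\<close> unfolding Cauchy_def by metis
    have "dist (y m) (y n) < \<epsilon>" if "m \<ge> M" "n \<ge> M" for m n
    proof -
      have "(norm (y m - y n))^2 < \<epsilon>^2" using M[OF that] diff2[of m n] by (simp add: dist_real_def)
      hence "norm (y m - y n) < \<epsilon>" using \<open>\<epsilon> > 0\<close> by (simp add: power_less_imp_less_base)
      thus ?thesis by (simp add: dist_norm)
    qed
    thus "\<exists>M. \<forall>m\<ge>M. \<forall>n\<ge>M. dist (y m) (y n) < \<epsilon>" by blast
  qed
  then obtain v where yv: "y \<longlonglongrightarrow> v" using Cauchy_convergent_iff convergent_def by blast
  have coef: "cinner e v = c e" if e: "e \<in> E" for e
  proof -
    have l1: "(\<lambda>N. cinner e (y N)) \<longlonglongrightarrow> cinner e v"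
      using bounded_linear.tendsto[OF bounded_linear_cinner_right yv] .
    have "eventually (\<lambda>N. cinner e (y N) = c e) sequentially"
    proof -
      have "\<forall>N\<ge>Suc (to_nat_on E e). cinner e (y N) = c e"
      proof (intro allI impI)
        fix N assume "Suc (to_nat_on E e) \<le> N"
        hence "e \<in> exh E N" using exh_cover[OF cE e] exh_mono[of "Suc (to_nat_on E e)" N E] by blast
        thus "cinner e (y N) = c e"
          unfolding y_def using cinner_combo[OF onb exh_finite exh_subset e] by simp
      qed
      thus ?thesis unfolding eventually_sequentially by blast
    qed
    hence "(\<lambda>N. cinner e (y N)) \<longlonglongrightarrow> c e" by (rule tendsto_eventually)
    thus ?thesis using l1 LIMSEQ_unique by blast
  qed
  have "(\<lambda>N. (norm (y N))^2) \<longlonglongrightarrow> (norm v)^2"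
    by (intro tendsto_intros yv)
  hence "a \<longlonglongrightarrow> (norm v)^2" using ya by simp
  hence "(norm v)^2 = s" using a_lim LIMSEQ_unique by blast
  thus ?thesis using yv coef unfolding y_def by blast
qed

lemma onb_expansion:
  fixes E :: "'a::chilbert_space set"
  assumes onb: "orthonormal_basis E" and cE: "countable E"
  shows "(\<lambda>N. \<Sum>e\<in>exh E N. scaleC (cinner e x) e) \<longlonglongrightarrow> x"
    and "((\<lambda>e. (cmod (cinner e x))^2) has_sum (norm x)^2) E"
proof -
  have S: "(\<lambda>e. (cmod (cinner e x))^2) summable_on E" by (rule bessel_summable[OF onb])
  obtain v where v: "(\<lambda>N. \<Sum>e\<in>exh E N. scaleC (cinner e x) e) \<longlonglongrightarrow> v"
    "\<forall>e\<in>E. cinner e v = cinner e x" "(norm v)^2 = infsum (\<lambda>e. (cmod (cinner e x))^2) E"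
    using onb_vector[OF onb cE S[unfolded summable_iff_has_sum_infsum]] by blast
  have "x - v = 0"
    by (rule onb_complete[OF onb]) (use v(2) in \<open>simp add: cinner_diff_right\<close>)
  hence xv: "x = v" by simp
  show "(\<lambda>N. \<Sum>e\<in>exh E N. scaleC (cinner e x) e) \<longlonglongrightarrow> x" using v(1) xv by simp
  show "((\<lambda>e. (cmod (cinner e x))^2) has_sum (norm x)^2) E"
    using S v(3) xv by (simp add: summable_iff_has_sum_infsum)
qed


lemma bclin_add: "bounded_clinear_op f \<Longrightarrow> f (x + y) = f x + f y"
  unfolding bounded_clinear_op_def by blast
lemma bclin_scaleC: "bounded_clinear_op f \<Longrightarrow> f (scaleC c x) = scaleC c (f x)"
  unfolding bounded_clinear_op_def by blast
lemma bclin_bounded_linear: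
  assumes "bounded_clinear_op (f :: 'a::complex_inner \<Rightarrow> 'a)"
  shows "bounded_linear f"
proof
  show "f (x + y) = f x + f y" for x y using bclin_add[OF assms] .
  show "f (scaleR r x) = scaleR r (f x)" for r x
    using bclin_scaleC[OF assms] by (simp add: scaleR_scaleC)
  obtain K where K: "\<forall>x. norm (f x) \<le> K * norm x" using assms unfolding bounded_clinear_op_def by blast
  show "\<exists>K. \<forall>x. norm (f x) \<le> norm x * K" using K by (metis mult.commute)
qed
lemma bclin_sum:
  assumes "bounded_clinear_op (f :: 'a::complex_inner \<Rightarrow> 'a)"
  shows "f (\<Sum>g\<in>F. scaleC (a g) (u g)) = (\<Sum>g\<in>F. scaleC (a g) (f (u g)))"
proof -
  interpret bounded_linear f by (rule bclin_bounded_linear[OF assms])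
  show ?thesis by (simp add: sum bclin_scaleC[OF assms])
qed

lemma adj_vec:
  fixes E0 :: "'a::chilbert_space set"
  assumes onb: "orthonormal_basis E0" and cE: "countable E0" and eta: "bounded_clinear_op \<eta>"
  shows "\<exists>v. (\<forall>x. cinner v x = cinner f (\<eta> x)) \<and>
             ((\<lambda>g. (cmod (cinner f (\<eta> g)))^2) has_sum (norm v)^2) E0"
proof -
  interpret bl: bounded_linear \<eta> by (rule bclin_bounded_linear[OF eta])
  obtain K where K: "K > 0" "\<And>x. norm (\<eta> x) \<le> norm x * K" using bl.pos_bounded by blast
  define c where "c g = cinner (\<eta> g) f" for g
  have cm: "cmod (c g) = cmod (cinner f (\<eta> g))" for g
    unfolding c_def by (metis cinner_commute complex_mod_cnj)
  have bound: "(\<Sum>g\<in>F. (cmod (c g))^2) \<le> (norm f * K)^2" if F: "finite F" "F \<subseteq> E0" for F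
  proof -
    define T where "T = (\<Sum>g\<in>F. (cmod (c g))^2)"
    define w where "w = (\<Sum>g\<in>F. scaleC (c g) g)"
    have T0: "T \<ge> 0" unfolding T_def by (simp add: sum_nonneg)
    have nw: "(norm w)^2 = T" unfolding w_def T_def by (rule norm_combo_sq[OF onb F])
    have "cinner f (\<eta> w) = (\<Sum>g\<in>F. c g * cinner f (\<eta> g))"
      unfolding w_def by (simp add: bclin_sum[OF eta] cinner_sum_right cinner_scaleC_right)
    also have "\<dots> = (\<Sum>g\<in>F. of_real ((cmod (c g))^2))"
    proof (rule sum.cong[OF refl])
      fix g
      have "c g = cnj (cinner f (\<eta> g))" unfolding c_def by (rule cinner_commute)
      thus "c g * cinner f (\<eta> g) = of_real ((cmod (c g))^2)"
        by (simp add: cnj_mult_self) 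
    qed
    finally have "cinner f (\<eta> w) = of_real T" unfolding T_def by simp
    hence "T \<le> norm f * norm (\<eta> w)" using cauchy_schwarz[of f "\<eta> w"] T0 by simp
    also have "\<dots> \<le> norm f * (norm w * K)" using K(2)[of w] by (simp add: mult_left_mono)
    finally have T1: "T \<le> (norm f * K) * sqrt T" using nw by (simp add: real_sqrt_unique mult_ac)
    show ?thesis
    proof (cases "T = 0")
      case True thus ?thesis unfolding T_def by simp
    next
      case False
      hence "sqrt T > 0" using T0 by simp
      have st: "sqrt T * sqrt T = T" using T0 by simp
      have "sqrt T * sqrt T \<le> (norm f * K) * sqrt T" unfolding st by (rule T1)
      from mult_right_le_imp_le[OF this \<open>sqrt T > 0\<close>]
      have "sqrt T \<le> norm f * K" .
      hence "(sqrt T)^2 \<le> (norm f * K)^2" using \<open>sqrt T > 0\<close> by (intro power_mono) auto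
      thus ?thesis unfolding T_def[symmetric] using T0 by simp
    qed
  qed
  have S: "(\<lambda>g. (cmod (c g))^2) summable_on E0"
    apply (rule nonneg_bdd_above_summable_on)
     apply simp
    using bound by (auto intro!: bdd_aboveI)
  obtain v where v: "(\<lambda>N. \<Sum>e\<in>exh E0 N. scaleC (c e) e) \<longlonglongrightarrow> v" "\<forall>e\<in>E0. cinner e v = c e"
    "(norm v)^2 = infsum (\<lambda>g. (cmod (c g))^2) E0"
    using onb_vector[OF onb cE S[unfolded summable_iff_has_sum_infsum]] by blast
  have vx: "cinner v x = cinner f (\<eta> x)" for x
  proof -
    define xn where "xn N = (\<Sum>e\<in>exh E0 N. scaleC (cinner e x) e)" for N
    have xl: "xn \<longlonglongrightarrow> x" unfolding xn_def by (rule onb_expansion(1)[OF onb cE])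
    have eq: "cinner v (xn N) = cinner f (\<eta> (xn N))" for N
    proof -
      have "cinner v (xn N) = (\<Sum>e\<in>exh E0 N. cinner e x * cinner v e)"
        unfolding xn_def by (simp add: cinner_sum_right cinner_scaleC_right)
      also have "\<dots> = (\<Sum>e\<in>exh E0 N. cinner e x * cinner f (\<eta> e))"
      proof (rule sum.cong[OF refl])
        fix e assume "e \<in> exh E0 N"
        hence "e \<in> E0" using exh_subset[of E0 N] by blast
        hence "cinner v e = cnj (c e)" using v(2) cinner_commute[of v e] by simp
        also have "\<dots> = cinner f (\<eta> e)" unfolding c_def using cinner_commute[of "\<eta> e" f] by simp
        finally show "cinner e x * cinner v e = cinner e x * cinner f (\<eta> e)" by simp
      qed
      also have "\<dots> = cinner f (\<eta> (xn N))"
        unfolding xn_def by (simp add: bclin_sum[OF eta] cinner_sum_right cinner_scaleC_right)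
      finally show ?thesis .
    qed
    have l1: "(\<lambda>N. cinner v (xn N)) \<longlonglongrightarrow> cinner v x"
      by (rule bounded_linear.tendsto[OF bounded_linear_cinner_right xl])
    have l2: "(\<lambda>N. cinner f (\<eta> (xn N))) \<longlonglongrightarrow> cinner f (\<eta> x)"
      by (rule bounded_linear.tendsto[OF bounded_linear_cinner_right bl.tendsto[OF xl]])
    show ?thesis using l1 l2 eq LIMSEQ_unique by simp
  qed
  have "((\<lambda>g. (cmod (c g))^2) has_sum (norm v)^2) E0"
    using S v(3) by (simp add: summable_iff_has_sum_infsum)
  hence "((\<lambda>g. (cmod (cinner f (\<eta> g)))^2) has_sum (norm v)^2) E0" by (simp add: cm)
  thus ?thesis using vx by blast
qed


lemma hs_indep:
  fixes E0 E1 :: "'a::chilbert_space set"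
  assumes onb0: "orthonormal_basis E0" and cE0: "countable E0"
    and onb1: "orthonormal_basis E1" and cE1: "countable E1"
    and eta: "bounded_clinear_op \<eta>"
    and S1: "(\<lambda>e. (norm (\<eta> e))^2) summable_on E1"
  shows "(\<lambda>e. (norm (\<eta> e))^2) summable_on E0"
proof -
  define G where "G e f = (cmod (cinner f (\<eta> e)))^2" for e f
  have G0: "G e f \<ge> 0" for e f unfolding G_def by simp
  have st1: "((\<lambda>f. G e f) has_sum (norm (\<eta> e))^2) E0" for e
    unfolding G_def by (rule onb_expansion(2)[OF onb0 cE0])
  have st2: "(\<lambda>(e,f). G e f) summable_on Sigma E1 (\<lambda>_. E0)"
    by (rule summable_on_SigmaI[where g = "\<lambda>e. (norm (\<eta> e))^2"]) (use st1 S1 G0 in auto)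
  have st3: "(\<lambda>(f,e). G e f) summable_on E0 \<times> E1"
    using st2 summable_on_swap[of "\<lambda>(e,f). G e f" E1 E0] by simp
  have "\<forall>f. \<exists>v. (\<forall>x. cinner v x = cinner f (\<eta> x)) \<and>
             ((\<lambda>g. (cmod (cinner f (\<eta> g)))^2) has_sum (norm v)^2) E0"
    using adj_vec[OF onb0 cE0 eta] by blast
  then obtain V where V: "\<And>f x. cinner (V f) x = cinner f (\<eta> x)"
    "\<And>f. ((\<lambda>g. G g f) has_sum (norm (V f))^2) E0"
    unfolding G_def by metis
  have st4: "((\<lambda>e. G e f) has_sum (norm (V f))^2) E1" for f
  proof -
    have "((\<lambda>e. (cmod (cinner e (V f)))^2) has_sum (norm (V f))^2) E1"
      by (rule onb_expansion(2)[OF onb1 cE1])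
    moreover have "cmod (cinner e (V f)) = cmod (cinner f (\<eta> e))" for e
      by (metis V(1) cinner_commute complex_mod_cnj)
    ultimately show ?thesis unfolding G_def by simp
  qed
  have "(\<lambda>x. infsum (\<lambda>y. (\<lambda>(f,e). G e f) (x, y)) E1) summable_on E0"
    by (rule summable_on_SigmaD) (use st3 st4 has_sum_imp_summable in auto)
  moreover have "(\<lambda>x. infsum (\<lambda>y. (\<lambda>(f,e). G e f) (x, y)) E1) = (\<lambda>f. (norm (V f))^2)"
    by (simp, intro ext infsumI st4)
  ultimately have st5: "(\<lambda>f. (norm (V f))^2) summable_on E0" by simp
  have st7: "(\<lambda>(f,g). G g f) summable_on Sigma E0 (\<lambda>_. E0)"
    by (rule summable_on_SigmaI[where g = "\<lambda>f. (norm (V f))^2"]) (use V(2) st5 G0 in auto)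
  have st8: "(\<lambda>(g,f). G g f) summable_on E0 \<times> E0"
    using st7 summable_on_swap[of "\<lambda>(f,g). G g f" E0 E0] by simp
  have "(\<lambda>x. infsum (\<lambda>y. (\<lambda>(g,f). G g f) (x, y)) E0) summable_on E0"
    by (rule summable_on_SigmaD) (use st8 st1 has_sum_imp_summable in auto)
  moreover have "(\<lambda>x. infsum (\<lambda>y. (\<lambda>(g,f). G g f) (x, y)) E0) = (\<lambda>e. (norm (\<eta> e))^2)"
    by (simp, intro ext infsumI st1)
  ultimately show ?thesis by simp
qed

definition nrm :: "'a set \<Rightarrow> ('a \<Rightarrow> 'b::real_normed_vector) \<Rightarrow> real" where
  "nrm E \<zeta> = sqrt (infsum (\<lambda>e. (norm (\<zeta> e))^2) E)"
definition HSV :: "'a set \<Rightarrow> ('a \<Rightarrow> 'b::real_normed_vector) set" where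
  "HSV E = {\<zeta>. (\<lambda>e. (norm (\<zeta> e))^2) summable_on E}"

lemma nrm_nonneg: "nrm E \<zeta> \<ge> 0"
  unfolding nrm_def by (simp add: infsum_nonneg)

lemma HSV_compare:
  assumes "\<xi> \<in> HSV E" "\<And>e. e \<in> E \<Longrightarrow> norm (\<zeta> e) \<le> C * norm (\<xi> e)"
  shows "\<zeta> \<in> HSV E" "nrm E \<zeta> \<le> \<bar>C\<bar> * nrm E \<xi>"
proof -
  have le: "(norm (\<zeta> e))^2 \<le> C^2 * (norm (\<xi> e))^2" if "e \<in> E" for e
  proof -
    have "norm (\<zeta> e) \<le> \<bar>C\<bar> * norm (\<xi> e)" using assms(2)[OF that] 
      by (meson abs_ge_self mult_right_mono norm_ge_zero order_trans)
    hence "(norm (\<zeta> e))^2 \<le> (\<bar>C\<bar> * norm (\<xi> e))^2" by (intro power_mono) auto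
    thus ?thesis by (simp add: power_mult_distrib)
  qed
  have S: "(\<lambda>e. C^2 * (norm (\<xi> e))^2) summable_on E"
    using assms(1) unfolding HSV_def by (simp add: summable_on_cmult_right)
  have fin: "sum (\<lambda>e. (norm (\<zeta> e))^2) F \<le> infsum (\<lambda>e. C^2 * (norm (\<xi> e))^2) E"
    if "finite F" "F \<subseteq> E" for F
  proof -
    have "sum (\<lambda>e. (norm (\<zeta> e))^2) F \<le> sum (\<lambda>e. C^2 * (norm (\<xi> e))^2) F"
      using le that by (intro sum_mono) auto
    also have "\<dots> \<le> infsum (\<lambda>e. C^2 * (norm (\<xi> e))^2) E"
      by (rule finite_sum_le_infsum[OF S that]) simp
    finally show ?thesis .
  qed
  show Z: "\<zeta> \<in> HSV E" unfolding HSV_def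
    apply (simp, rule nonneg_bdd_above_summable_on)
     apply simp
    using fin by (auto intro!: bdd_aboveI)
  have "infsum (\<lambda>e. (norm (\<zeta> e))^2) E \<le> infsum (\<lambda>e. C^2 * (norm (\<xi> e))^2) E"
    by (rule infsum_le_finite_sums) (use Z fin in \<open>auto simp: HSV_def\<close>)
  also have "\<dots> = C^2 * infsum (\<lambda>e. (norm (\<xi> e))^2) E" by (simp add: infsum_cmult_right')
  finally have "sqrt (infsum (\<lambda>e. (norm (\<zeta> e))^2) E) \<le> sqrt (C^2 * infsum (\<lambda>e. (norm (\<xi> e))^2) E)"
    by (rule real_sqrt_le_mono)
  thus "nrm E \<zeta> \<le> \<bar>C\<bar> * nrm E \<xi>" unfolding nrm_def by (simp add: real_sqrt_mult)
qed

lemma HSV_add: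
  assumes "\<zeta> \<in> HSV E" "\<xi> \<in> HSV E"
  shows "(\<lambda>x. \<zeta> x + \<xi> x) \<in> HSV E" "nrm E (\<lambda>x. \<zeta> x + \<xi> x) \<le> nrm E \<zeta> + nrm E \<xi>"
proof -
  have fin: "sum (\<lambda>e. (norm (\<zeta> e + \<xi> e))^2) F \<le> (nrm E \<zeta> + nrm E \<xi>)^2"
    if F: "finite F" "F \<subseteq> E" for F
  proof -
    have "sqrt (sum (\<lambda>e. (norm (\<zeta> e + \<xi> e))^2) F) = L2_set (\<lambda>e. norm (\<zeta> e + \<xi> e)) F"
      unfolding L2_set_def ..
    also have "\<dots> \<le> L2_set (\<lambda>e. norm (\<zeta> e) + norm (\<xi> e)) F"
      by (rule L2_set_mono) (auto simp: norm_triangle_ineq)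
    also have "\<dots> \<le> L2_set (\<lambda>e. norm (\<zeta> e)) F + L2_set (\<lambda>e. norm (\<xi> e)) F"
      by (rule L2_set_triangle_ineq)
    also have "L2_set (\<lambda>e. norm (\<zeta> e)) F \<le> nrm E \<zeta>"
      unfolding L2_set_def nrm_def
      by (rule real_sqrt_le_mono, rule finite_sum_le_infsum) (use assms F in \<open>auto simp: HSV_def\<close>)
    also have "L2_set (\<lambda>e. norm (\<xi> e)) F \<le> nrm E \<xi>"
      unfolding L2_set_def nrm_def
      by (rule real_sqrt_le_mono, rule finite_sum_le_infsum) (use assms F in \<open>auto simp: HSV_def\<close>)
    finally have "sqrt (sum (\<lambda>e. (norm (\<zeta> e + \<xi> e))^2) F) \<le> nrm E \<zeta> + nrm E \<xi>" by simp
    hence "(sqrt (sum (\<lambda>e. (norm (\<zeta> e + \<xi> e))^2) F))^2 \<le> (nrm E \<zeta> + nrm E \<xi>)^2"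
      by (intro power_mono) (simp_all add: sum_nonneg)
    thus ?thesis by (simp add: sum_nonneg)
  qed
  show Z: "(\<lambda>x. \<zeta> x + \<xi> x) \<in> HSV E" unfolding HSV_def
    apply (simp, rule nonneg_bdd_above_summable_on)
     apply simp
    using fin by (auto intro!: bdd_aboveI)
  have "infsum (\<lambda>e. (norm (\<zeta> e + \<xi> e))^2) E \<le> (nrm E \<zeta> + nrm E \<xi>)^2"
    by (rule infsum_le_finite_sums) (use Z fin in \<open>auto simp: HSV_def\<close>)
  hence "sqrt (infsum (\<lambda>e. (norm (\<zeta> e + \<xi> e))^2) E) \<le> sqrt ((nrm E \<zeta> + nrm E \<xi>)^2)"
    by (rule real_sqrt_le_mono)
  thus "nrm E (\<lambda>x. \<zeta> x + \<xi> x) \<le> nrm E \<zeta> + nrm E \<xi>"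
    unfolding nrm_def[of E "\<lambda>x. \<zeta> x + \<xi> x"] using nrm_nonneg[of E \<zeta>] nrm_nonneg[of E \<xi>] by simp
qed

lemma HSV_scaleC:
  fixes \<zeta> :: "'a \<Rightarrow> 'b::complex_inner"
  assumes "\<zeta> \<in> HSV E"
  shows "(\<lambda>x. scaleC c (\<zeta> x)) \<in> HSV E" "nrm E (\<lambda>x. scaleC c (\<zeta> x)) = cmod c * nrm E \<zeta>"
proof -
  have eq: "(\<lambda>e. (norm (scaleC c (\<zeta> e)))^2) = (\<lambda>e. (cmod c)^2 * (norm (\<zeta> e))^2)"
    by (simp add: norm_scaleC power_mult_distrib)
  show "(\<lambda>x. scaleC c (\<zeta> x)) \<in> HSV E"
    using assms unfolding HSV_def by (simp add: eq summable_on_cmult_right)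
  show "nrm E (\<lambda>x. scaleC c (\<zeta> x)) = cmod c * nrm E \<zeta>"
    unfolding nrm_def eq by (simp add: infsum_cmult_right' real_sqrt_mult)
qed

lemma HSV_minus:
  fixes \<zeta> :: "'a \<Rightarrow> 'b::complex_inner"
  assumes "\<zeta> \<in> HSV E"
  shows "(\<lambda>x. - \<zeta> x) \<in> HSV E" "nrm E (\<lambda>x. - \<zeta> x) = nrm E \<zeta>"
  using assms unfolding HSV_def nrm_def by simp_all

lemma HSV_diff:
  fixes \<zeta> :: "'a \<Rightarrow> 'b::complex_inner"
  assumes "\<zeta> \<in> HSV E" "\<xi> \<in> HSV E"
  shows "(\<lambda>x. \<zeta> x - \<xi> x) \<in> HSV E" "nrm E (\<lambda>x. \<zeta> x - \<xi> x) \<le> nrm E \<zeta> + nrm E \<xi>"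
  using HSV_add[OF assms(1) HSV_minus(1)[OF assms(2)]] HSV_minus(2)[OF assms(2)] by simp_all

lemma HSV_sum:
  fixes \<zeta> :: "'i \<Rightarrow> 'a \<Rightarrow> 'b::complex_inner"
  assumes "finite I" "\<And>i. i \<in> I \<Longrightarrow> \<zeta> i \<in> HSV E"
  shows "(\<lambda>x. \<Sum>i\<in>I. \<zeta> i x) \<in> HSV E \<and> nrm E (\<lambda>x. \<Sum>i\<in>I. \<zeta> i x) \<le> (\<Sum>i\<in>I. nrm E (\<zeta> i))"
  using assms
proof (induction I rule: finite_induct)
  case empty
  show ?case by (simp add: HSV_def nrm_def)
next
  case (insert j I)
  have h: "(\<lambda>x. \<Sum>i\<in>I. \<zeta> i x) \<in> HSV E" "nrm E (\<lambda>x. \<Sum>i\<in>I. \<zeta> i x) \<le> (\<Sum>i\<in>I. nrm E (\<zeta> i))"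
    using insert by auto
  have j: "\<zeta> j \<in> HSV E" using insert by auto
  have eq: "(\<lambda>x. \<Sum>i\<in>insert j I. \<zeta> i x) = (\<lambda>x. \<zeta> j x + (\<Sum>i\<in>I. \<zeta> i x))"
    using insert by simp
  show ?case unfolding eq using HSV_add[OF j h(1)] h(2) insert by simp
qed


definition E0 :: "'a::complex_inner set" where
  "E0 = (SOME E. orthonormal_basis E)"

lemma E0_onb:
  assumes "\<exists>E::'a::complex_inner set. orthonormal_basis E"
  shows "orthonormal_basis (E0::'a set)"
  unfolding E0_def using someI_ex[OF assms] .

lemma S2_char:
  fixes \<eta> :: "'a::chilbert_space \<Rightarrow> 'a"
  assumes sep: "separable_space TYPE('a)" and ex: "\<exists>E::'a set. orthonormal_basis E"
  shows "\<eta> \<in> S2 \<longleftrightarrow> bounded_clinear_op \<eta> \<and> \<eta> \<in> HSV E0"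
proof
  have onb0: "orthonormal_basis (E0::'a set)" by (rule E0_onb[OF ex])
  have c0: "countable (E0::'a set)" by (rule onb_countable[OF sep onb0])
  {
    assume "\<eta> \<in> S2"
    then obtain E1 :: "'a set" where b: "bounded_clinear_op \<eta>" and E1: "orthonormal_basis E1"
      "(\<lambda>e. (norm (\<eta> e))^2) summable_on E1"
      unfolding S2_def hilbert_schmidt_def by blast
    have "(\<lambda>e. (norm (\<eta> e))^2) summable_on E0"
      by (rule hs_indep[OF onb0 c0 E1(1) onb_countable[OF sep E1(1)] b E1(2)])
    thus "bounded_clinear_op \<eta> \<and> \<eta> \<in> HSV E0" using b by (simp add: HSV_def)
  }
  {
    assume "bounded_clinear_op \<eta> \<and> \<eta> \<in> HSV E0"
    thus "\<eta> \<in> S2" unfolding S2_def hilbert_schmidt_def HSV_def using onb0 by blast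
  }
qed

lemma hs_norm_nrm:
  fixes \<eta> :: "'a::complex_inner \<Rightarrow> 'a"
  assumes "\<eta> \<in> HSV E0"
  shows "hs_norm \<eta> = nrm E0 \<eta>"
proof -
  have S: "((\<lambda>e. (norm (\<eta> e))^2) has_sum infsum (\<lambda>e. (norm (\<eta> e))^2) E0) E0"
    using assms unfolding HSV_def by simp
  have "((\<lambda>e. of_real ((norm (\<eta> e))^2) :: complex) has_sum of_real (infsum (\<lambda>e. (norm (\<eta> e))^2) E0)) E0"
    by (rule has_sum_of_real[OF S])
  hence "hs_inner \<eta> \<eta> = of_real (infsum (\<lambda>e. (norm (\<eta> e))^2) E0)"
    unfolding hs_inner_def E0_def[symmetric] by (simp add: cinner_self_real infsumI)
  thus ?thesis unfolding hs_norm_def nrm_def by simp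
qed

lemma hs_inner_cnj: "hs_inner \<xi> \<zeta> = cnj (hs_inner \<zeta> \<xi>)"
  unfolding hs_inner_def by (subst infsum_cnj[symmetric]) (metis cinner_commute)

definition Rk :: "'a::complex_inner \<Rightarrow> 'a \<Rightarrow> 'a \<Rightarrow> 'a" where
  "Rk u v = (\<lambda>x. scaleC (cinner v x) u)"

lemma bclin_Rk: "bounded_clinear_op (Rk u v)"
  unfolding bounded_clinear_op_def Rk_def
proof (intro conjI allI exI)
  show "scaleC (cinner v (x + y)) u = scaleC (cinner v x) u + scaleC (cinner v y) u" for x y
    by (simp add: cinner_add_right scaleC_add_left)
  show "scaleC (cinner v (scaleC c x)) u = scaleC c (scaleC (cinner v x) u)" for c x
    by (simp add: cinner_scaleC_right scaleC_scaleC)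
  show "norm (scaleC (cinner v x) u) \<le> (norm v * norm u) * norm x" for x
    using cauchy_schwarz[of v x] by (simp add: norm_scaleC mult_left_mono mult_ac)
qed

lemma Rk_HSV:
  fixes E :: "'a::chilbert_space set"
  assumes onb: "orthonormal_basis E" and cE: "countable E"
  shows "Rk u v \<in> HSV E" "nrm E (Rk u v) = norm u * norm v"
proof -
  have "((\<lambda>e. (cmod (cinner e v))^2) has_sum (norm v)^2) E" by (rule onb_expansion(2)[OF onb cE])
  hence "((\<lambda>e. (norm u)^2 * (cmod (cinner e v))^2) has_sum (norm u)^2 * (norm v)^2) E"
    by (rule has_sum_cmult_right)
  moreover have "(norm (Rk u v e))^2 = (norm u)^2 * (cmod (cinner e v))^2" for e
    unfolding Rk_def by (simp add: norm_scaleC power_mult_distrib) (metis cinner_commute complex_mod_cnj)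
  ultimately have h: "((\<lambda>e. (norm (Rk u v e))^2) has_sum (norm u * norm v)^2) E"
    by (simp add: power_mult_distrib)
  show "Rk u v \<in> HSV E" using h unfolding HSV_def by (simp add: has_sum_imp_summable)
  show "nrm E (Rk u v) = norm u * norm v" using h unfolding nrm_def by (simp add: infsumI)
qed

lemma hs_inner_Rk:
  fixes i j :: "'a::complex_inner"
  assumes onb: "orthonormal_basis (E0::'a set)" and ij: "i \<in> E0" "j \<in> E0"
  shows "hs_inner (Rk i j) \<xi> = cinner i (\<xi> j)"
proof -
  have "hs_inner (Rk i j) \<xi> = infsum (\<lambda>e. cinner (Rk i j e) (\<xi> e)) E0"
    unfolding hs_inner_def E0_def ..
  also have "\<dots> = infsum (\<lambda>e. cinner i (\<xi> j)) {j}"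
  proof (rule infsum_cong_neutral)
    fix x assume "x \<in> E0 - {j}"
    hence "cinner j x = 0" using onb_inner[OF onb ij(2)] by auto
    thus "cinner (Rk i j x) (\<xi> x) = 0" unfolding Rk_def by (simp add: cinner_scaleC_left)
  next
    fix x assume "x \<in> E0 \<inter> {j}"
    hence "x = j" by simp
    moreover have "cinner j j = 1" using onb_inner[OF onb ij(2) ij(2)] by simp
    ultimately show "cinner (Rk i j x) (\<xi> x) = cinner i (\<xi> j)"
      unfolding Rk_def by (simp add: cinner_scaleC_left)
  qed (use ij in auto)
  also have "\<dots> = cinner i (\<xi> j)" by simp
  finally show ?thesis .
qed


lemma infsum_dct:
  fixes g :: "nat \<Rightarrow> 'a \<Rightarrow> real"
  assumes h: "h summable_on E"
    and b: "\<And>N e. e \<in> E \<Longrightarrow> 0 \<le> g N e \<and> g N e \<le> h e"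
    and l: "\<And>e. e \<in> E \<Longrightarrow> (\<lambda>N. g N e) \<longlonglongrightarrow> 0"
  shows "(\<lambda>N. infsum (g N) E) \<longlonglongrightarrow> 0"
proof (rule LIMSEQ_I)
  fix r :: real assume r: "r > 0"
  have "(sum h \<longlongrightarrow> infsum h E) (finite_subsets_at_top E)"
    using h unfolding summable_iff_has_sum_infsum has_sum_def .
  hence "eventually (\<lambda>F. dist (sum h F) (infsum h E) < r/2) (finite_subsets_at_top E)"
    using r by (intro tendstoD) auto
  then obtain F where F: "finite F" "F \<subseteq> E" and XP: "\<forall>Y. finite Y \<and> F \<subseteq> Y \<and> Y \<subseteq> E \<longrightarrow> dist (sum h Y) (infsum h E) < r/2"
    unfolding eventually_finite_subsets_at_top by blast
  have hF: "dist (sum h F) (infsum h E) < r/2" using XP F by blast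
  have hsplit: "infsum h E = sum h F + infsum h (E - F)"
  proof -
    have "infsum h (F \<union> (E - F)) = infsum h F + infsum h (E - F)"
      by (rule infsum_Un_disjoint) (use F summable_on_subset_banach[OF h, of F] summable_on_subset_banach[OF h, of "E - F"] in auto)
    moreover have "F \<union> (E - F) = E" using F by auto
    ultimately show ?thesis using F by simp
  qed
  have gS: "g N summable_on A" if "A \<subseteq> E" for N A
    by (rule summable_on_comparison_test[OF summable_on_subset_banach[OF h that]]) (use b that in auto)
  have "(\<lambda>N. sum (g N) F) \<longlonglongrightarrow> 0"
    by (rule tendsto_null_sum) (use l F in auto)
  hence "eventually (\<lambda>N. dist (sum (g N) F) 0 < r/2) sequentially"
    using r by (intro tendstoD) auto
  then obtain N0 where N0: "\<And>N. N \<ge> N0 \<Longrightarrow> dist (sum (g N) F) 0 < r/2"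
    unfolding eventually_sequentially by blast
  have "norm (infsum (g N) E - 0) < r" if "N \<ge> N0" for N
  proof -
    have "infsum (g N) E = sum (g N) F + infsum (g N) (E - F)"
    proof -
      have "infsum (g N) (F \<union> (E - F)) = infsum (g N) F + infsum (g N) (E - F)"
        by (rule infsum_Un_disjoint) (use F gS in auto)
      moreover have "F \<union> (E - F) = E" using F by auto
      ultimately show ?thesis using F by simp
    qed
    also have "infsum (g N) (E - F) \<le> infsum h (E - F)"
      by (rule infsum_mono) (use gS summable_on_subset_banach[OF h, of "E - F"] b in auto)
    also have "infsum h (E - F) = infsum h E - sum h F" using hsplit by simp
    finally have up: "infsum (g N) E \<le> sum (g N) F + (infsum h E - sum h F)" by simp
    have lo: "infsum (g N) E \<ge> 0" by (rule infsum_nonneg) (use b in auto)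
    have "sum (g N) F < r/2" using N0[OF that] by (simp add: dist_real_def)
    moreover have "\<bar>sum h F - infsum h E\<bar> < r/2" using hF by (simp add: dist_real_def)
    hence "infsum h E - sum h F < r/2" using abs_ge_minus_self[of "sum h F - infsum h E"] by linarith
    ultimately show ?thesis using up lo by simp
  qed
  thus "\<exists>no. \<forall>n\<ge>no. norm (infsum (g n) E - 0) < r" by blast
qed

definition pN :: "'a::complex_inner set \<Rightarrow> nat \<Rightarrow> 'a \<Rightarrow> 'a" where
  "pN E N x = (\<Sum>e\<in>exh E N. scaleC (cinner e x) e)"
definition QN :: "'a::complex_inner set \<Rightarrow> nat \<Rightarrow> ('a \<Rightarrow> 'a) \<Rightarrow> ('a \<Rightarrow> 'a)" where
  "QN E N \<zeta> = (\<lambda>x. pN E N (\<zeta> (pN E N x)))"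

lemma pN_add: "pN E N (x + y) = pN E N x + pN E N y"
  unfolding pN_def by (simp add: cinner_add_right scaleC_add_left sum.distrib)
lemma pN_scaleC: "pN E N (scaleC c x) = scaleC c (pN E N x)"
  unfolding pN_def by (simp add: cinner_scaleC_right scaleC_sum_right scaleC_scaleC)
lemma pN_zero[simp]: "pN E N 0 = 0"
  unfolding pN_def by simp
lemma pN_minus: "pN E N (- x) = - pN E N x"
  unfolding pN_def by (simp add: cinner_minus_right scaleC_minus_left sum_negf)
lemma pN_diff: "pN E N (x - y) = pN E N x - pN E N y"
  using pN_add[of E N x "-y"] by (simp add: pN_minus)

lemma pN_resid_sq:
  fixes E :: "'a::complex_inner set"
  assumes onb: "orthonormal_basis E"
  shows "(norm (x - pN E N x))^2 = (norm x)^2 - (\<Sum>e\<in>exh E N. (cmod (cinner e x))^2)"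
proof -
  define p where "p = pN E N x"
  define S where "S = (\<Sum>e\<in>exh E N. (cmod (cinner e x))^2)"
  have px: "cinner p x = of_real S"
  proof -
    have "cinner p x = (\<Sum>e\<in>exh E N. cnj (cinner e x) * cinner e x)"
      unfolding p_def pN_def by (simp add: cinner_sum_left cinner_scaleC_left)
    also have "\<dots> = (\<Sum>e\<in>exh E N. of_real ((cmod (cinner e x))^2))" by (simp only: cnj_mult_self)
    finally show ?thesis unfolding S_def by simp
  qed
  have xp: "cinner x p = of_real S"
    using px cinner_commute[of x p] by simp
  have pp: "cinner p p = of_real S"
    unfolding p_def S_def pN_def by (rule cinner_combo_self[OF onb exh_finite exh_subset])
  have "cinner (x - p) (x - p) = cinner x x - cinner x p - cinner p x + cinner p p"
    by (simp add: cinner_diff_left cinner_diff_right)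
  also have "\<dots> = cinner x x - of_real S" using px xp pp by simp
  finally show ?thesis unfolding p_def S_def by (simp add: norm_sq_cinner)
qed

lemma pN_resid_le:
  fixes E :: "'a::complex_inner set"
  assumes onb: "orthonormal_basis E"
  shows "norm (x - pN E N x) \<le> norm x"
proof -
  have "(norm (x - pN E N x))^2 \<le> (norm x)^2"
    using pN_resid_sq[OF onb, of x N] by (simp add: sum_nonneg)
  thus ?thesis using abs_le_square_iff by fastforce
qed

lemma pN_norm_le:
  fixes E :: "'a::complex_inner set"
  assumes onb: "orthonormal_basis E"
  shows "norm (pN E N x) \<le> norm x"
proof -
  have "(norm (pN E N x))^2 = (\<Sum>e\<in>exh E N. (cmod (cinner e x))^2)"
    unfolding pN_def by (rule norm_combo_sq[OF onb exh_finite exh_subset])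
  also have "\<dots> \<le> (norm x)^2" by (rule bessel_finite[OF onb exh_finite exh_subset])
  finally show ?thesis using abs_le_square_iff by fastforce
qed

lemma pN_basis_in:
  fixes E :: "'a::complex_inner set"
  assumes onb: "orthonormal_basis E" and e: "e \<in> exh E N"
  shows "pN E N e = e"
proof -
  have eE: "e \<in> E" using e exh_subset[of E N] by blast
  have "pN E N e = (\<Sum>i\<in>exh E N. if i = e then e else 0)"
    unfolding pN_def
  proof (rule sum.cong[OF refl])
    fix i assume "i \<in> exh E N"
    hence "i \<in> E" using exh_subset[of E N] by blast
    thus "scaleC (cinner i e) i = (if i = e then e else 0)"
      using onb_inner[OF onb _ eE] by (simp add: scaleC_one)
  qed
  also have "\<dots> = e" using e by (simp add: sum.delta')
  finally show ?thesis .
qed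

lemma pN_basis_out:
  fixes E :: "'a::complex_inner set"
  assumes onb: "orthonormal_basis E" and e: "e \<in> E" "e \<notin> exh E N"
  shows "pN E N e = 0"
  unfolding pN_def
proof (rule sum.neutral, rule ballI)
  fix i assume "i \<in> exh E N"
  hence "i \<in> E" "i \<noteq> e" using exh_subset[of E N] e by auto
  thus "scaleC (cinner i e) i = 0" using onb_inner[OF onb _ e(1)] by simp
qed

lemma bclin_zero: "bounded_clinear_op f \<Longrightarrow> f 0 = 0"
  using bclin_scaleC[of f 0 0] by simp

lemma QN_bound:
  fixes E :: "'a::complex_inner set"
  assumes onb: "orthonormal_basis E" and z: "bounded_clinear_op \<zeta>" and e: "e \<in> E"
  shows "norm (QN E N \<zeta> e) \<le> norm (\<zeta> e)"
    and "norm (QN E N \<zeta> e - \<zeta> e) \<le> norm (\<zeta> e)"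
proof -
  have "norm (QN E N \<zeta> e) \<le> norm (\<zeta> e) \<and> norm (QN E N \<zeta> e - \<zeta> e) \<le> norm (\<zeta> e)"
  proof (cases "e \<in> exh E N")
    case True
    hence q: "QN E N \<zeta> e = pN E N (\<zeta> e)" unfolding QN_def using pN_basis_in[OF onb True] by simp
    show ?thesis unfolding q using pN_norm_le[OF onb] pN_resid_le[OF onb, of "\<zeta> e"]
      by (simp add: norm_minus_commute)
  next
    case False
    hence "QN E N \<zeta> e = 0" unfolding QN_def using pN_basis_out[OF onb e False] bclin_zero[OF z] by simp
    thus ?thesis by simp
  qed
  thus "norm (QN E N \<zeta> e) \<le> norm (\<zeta> e)" "norm (QN E N \<zeta> e - \<zeta> e) \<le> norm (\<zeta> e)" by auto
qed

lemma QN_HSV: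
  fixes E :: "'a::complex_inner set"
  assumes onb: "orthonormal_basis E" and z: "bounded_clinear_op \<zeta>" "\<zeta> \<in> HSV E"
  shows "QN E N \<zeta> \<in> HSV E" "nrm E (QN E N \<zeta>) \<le> nrm E \<zeta>"
  using HSV_compare[OF z(2), of "QN E N \<zeta>" 1] QN_bound(1)[OF onb z(1)] by auto

lemma QN_conv:
  fixes E :: "'a::chilbert_space set"
  assumes onb: "orthonormal_basis E" and cE: "countable E"
    and z: "bounded_clinear_op \<zeta>" "\<zeta> \<in> HSV E"
  shows "(\<lambda>N. nrm E (\<lambda>x. QN E N \<zeta> x - \<zeta> x)) \<longlonglongrightarrow> 0"
proof -
  define g where "g N e = (norm (QN E N \<zeta> e - \<zeta> e))^2" for N e
  have "(\<lambda>N. infsum (g N) E) \<longlonglongrightarrow> 0"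
  proof (rule infsum_dct)
    show "(\<lambda>e. (norm (\<zeta> e))^2) summable_on E" using z(2) unfolding HSV_def by simp
    show "0 \<le> g N e \<and> g N e \<le> (norm (\<zeta> e))^2" if "e \<in> E" for N e
      unfolding g_def using QN_bound(2)[OF onb z(1) that, of N] by (simp add: power_mono)
    show "(\<lambda>N. g N e) \<longlonglongrightarrow> 0" if e: "e \<in> E" for e
    proof -
      have ev: "eventually (\<lambda>N. g N e = (norm (\<zeta> e - pN E N (\<zeta> e)))^2) sequentially"
        unfolding eventually_sequentially
      proof (intro exI allI impI)
        fix N assume "Suc (to_nat_on E e) \<le> N"
        hence "e \<in> exh E N" using exh_cover[OF cE e] exh_mono[of "Suc (to_nat_on E e)" N E] by blast
        thus "g N e = (norm (\<zeta> e - pN E N (\<zeta> e)))^2"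
          unfolding g_def QN_def using pN_basis_in[OF onb] by (simp add: norm_minus_commute)
      qed
      have "(\<lambda>N. pN E N (\<zeta> e)) \<longlonglongrightarrow> \<zeta> e"
        unfolding pN_def by (rule onb_expansion(1)[OF onb cE])
      hence "(\<lambda>N. \<zeta> e - pN E N (\<zeta> e)) \<longlonglongrightarrow> \<zeta> e - \<zeta> e" by (rule tendsto_diff[OF tendsto_const])
      hence "(\<lambda>N. (norm (\<zeta> e - pN E N (\<zeta> e)))^2) \<longlonglongrightarrow> (norm (\<zeta> e - \<zeta> e))^2"
        by (rule tendsto_power[OF tendsto_norm])
      hence lim: "(\<lambda>N. (norm (\<zeta> e - pN E N (\<zeta> e)))^2) \<longlonglongrightarrow> 0" by simp
      have ev2: "eventually (\<lambda>N. (norm (\<zeta> e - pN E N (\<zeta> e)))^2 = g N e) sequentially"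
        using ev by (rule eventually_mono) simp
      show ?thesis by (rule Lim_transform_eventually[OF lim ev2])
    qed
  qed
  hence "(\<lambda>N. sqrt (infsum (g N) E)) \<longlonglongrightarrow> sqrt 0" by (rule tendsto_real_sqrt)
  thus ?thesis unfolding nrm_def g_def by simp
qed


lemma bclin_add_fun:
  assumes "bounded_clinear_op (f::'a::complex_inner \<Rightarrow> 'a)" "bounded_clinear_op g"
  shows "bounded_clinear_op (\<lambda>x. f x + g x)"
proof -
  obtain K1 where K1: "\<forall>x. norm (f x) \<le> K1 * norm x" using assms(1) unfolding bounded_clinear_op_def by blast
  obtain K2 where K2: "\<forall>x. norm (g x) \<le> K2 * norm x" using assms(2) unfolding bounded_clinear_op_def by blast
  show ?thesis unfolding bounded_clinear_op_def
  proof (intro conjI allI exI)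
    show "f (x + y) + g (x + y) = f x + g x + (f y + g y)" for x y
      using bclin_add[OF assms(1)] bclin_add[OF assms(2)] by (simp add: add_ac)
    show "f (scaleC c x) + g (scaleC c x) = scaleC c (f x + g x)" for c x
      using bclin_scaleC[OF assms(1)] bclin_scaleC[OF assms(2)] by (simp add: scaleC_add_right)
    show "norm (f x + g x) \<le> (K1 + K2) * norm x" for x
      using norm_triangle_ineq[of "f x" "g x"] K1 K2 by (simp add: algebra_simps) (smt (verit))
  qed
qed

lemma bclin_scale_fun:
  assumes "bounded_clinear_op (f::'a::complex_inner \<Rightarrow> 'a)"
  shows "bounded_clinear_op (\<lambda>x. scaleC c (f x))"
proof -
  obtain K where K: "\<forall>x. norm (f x) \<le> K * norm x" using assms unfolding bounded_clinear_op_def by blast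
  show ?thesis unfolding bounded_clinear_op_def
  proof (intro conjI allI exI)
    show "scaleC c (f (x + y)) = scaleC c (f x) + scaleC c (f y)" for x y
      using bclin_add[OF assms] by (simp add: scaleC_add_right)
    show "scaleC c (f (scaleC d x)) = scaleC d (scaleC c (f x))" for d x
      using bclin_scaleC[OF assms] by (simp add: scaleC_scaleC mult.commute)
    show "norm (scaleC c (f x)) \<le> (cmod c * K) * norm x" for x
      using K by (simp add: norm_scaleC mult.assoc mult_left_mono)
  qed
qed

lemma bclin_zero_fun: "bounded_clinear_op (\<lambda>x::'a::complex_inner. 0::'a)"
  unfolding bounded_clinear_op_def by (simp, rule exI[of _ 0], simp)

lemma sa_add:
  assumes "selfadjoint_on_S2 A" "\<eta> \<in> S2" "\<tau> \<in> S2"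
  shows "A (\<lambda>x. \<eta> x + \<tau> x) = (\<lambda>x. A \<eta> x + A \<tau> x)"
proof -
  from assms(1) have "\<forall>\<eta>\<in>S2. \<forall>\<tau>\<in>S2. A (\<lambda>x. \<eta> x + \<tau> x) = (\<lambda>x. A \<eta> x + A \<tau> x)"
    unfolding selfadjoint_on_S2_def by blast
  thus ?thesis using assms(2,3) by blast
qed

lemma sa_scale:
  assumes "selfadjoint_on_S2 A" "\<eta> \<in> S2"
  shows "A (\<lambda>x. scaleC c (\<eta> x)) = (\<lambda>x. scaleC c (A \<eta> x))"
proof -
  from assms(1) have "\<forall>c. \<forall>\<eta>\<in>S2. A (\<lambda>x. scaleC c (\<eta> x)) = (\<lambda>x. scaleC c (A \<eta> x))"
    unfolding selfadjoint_on_S2_def by blast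
  thus ?thesis using assms(2) by blast
qed

lemma sa_S2:
  assumes "selfadjoint_on_S2 A" "\<eta> \<in> S2"
  shows "A \<eta> \<in> S2"
  using assms unfolding selfadjoint_on_S2_def by blast

lemma sa_sym:
  assumes "selfadjoint_on_S2 A" "\<eta> \<in> S2" "\<tau> \<in> S2"
  shows "hs_inner (A \<eta>) \<tau> = hs_inner \<eta> (A \<tau>)"
  using assms unfolding selfadjoint_on_S2_def by blast

context
  fixes A :: "('h::chilbert_space \<Rightarrow> 'h) \<Rightarrow> ('h \<Rightarrow> 'h)"
  assumes sep: "separable_space TYPE('h)" and ex: "\<exists>E::'h set. orthonormal_basis E"
begin

lemma onb0: "orthonormal_basis (E0::'h set)" by (rule E0_onb[OF ex])
lemma cE0: "countable (E0::'h set)" by (rule onb_countable[OF sep onb0])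

lemma S2_iff: "(\<eta>::'h\<Rightarrow>'h) \<in> S2 \<longleftrightarrow> bounded_clinear_op \<eta> \<and> \<eta> \<in> HSV E0"
  by (rule S2_char[OF sep ex])

lemma sa_bound:
  assumes "selfadjoint_on_S2 A"
  shows "\<exists>K\<ge>0. \<forall>\<eta>\<in>S2. hs_norm (A \<eta>) \<le> K * hs_norm \<eta>"
proof -
  obtain K where K: "\<forall>\<eta>\<in>S2. hs_norm (A \<eta>) \<le> K * hs_norm \<eta>"
    using assms unfolding selfadjoint_on_S2_def by blast
  have "hs_norm (A \<eta>) \<le> max K 0 * hs_norm \<eta>" if "\<eta> \<in> S2" for \<eta>
  proof -
    have "hs_norm \<eta> \<ge> 0" using that S2_iff hs_norm_nrm nrm_nonneg by metis
    hence "K * hs_norm \<eta> \<le> max K 0 * hs_norm \<eta>" by (simp add: mult_right_mono)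
    thus ?thesis using K that by force
  qed
  thus ?thesis by (intro exI[of _ "max K 0"]) auto
qed


lemma S2_zero: "(\<lambda>x::'h. 0::'h) \<in> S2"
  unfolding S2_iff HSV_def by (simp add: bclin_zero_fun)

lemma S2_add: "(\<zeta>::'h\<Rightarrow>'h) \<in> S2 \<Longrightarrow> \<xi> \<in> S2 \<Longrightarrow> (\<lambda>x. \<zeta> x + \<xi> x) \<in> S2"
  unfolding S2_iff using bclin_add_fun HSV_add(1) by blast

lemma S2_scale: "(\<zeta>::'h\<Rightarrow>'h) \<in> S2 \<Longrightarrow> (\<lambda>x. scaleC c (\<zeta> x)) \<in> S2"
  unfolding S2_iff using bclin_scale_fun HSV_scaleC(1) by blast

lemma S2_Rk: "Rk (u::'h) v \<in> S2"
  unfolding S2_iff using bclin_Rk Rk_HSV(1)[OF onb0 cE0] by blast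

lemma S2_lincomb:
  assumes "finite I" "\<And>i. i \<in> I \<Longrightarrow> (\<zeta> i::'h\<Rightarrow>'h) \<in> S2"
  shows "(\<lambda>x. \<Sum>i\<in>I. scaleC (c i) (\<zeta> i x)) \<in> S2"
  using assms
proof (induction I rule: finite_induct)
  case empty thus ?case using S2_zero by simp
next
  case (insert j I)
  have "(\<lambda>x. scaleC (c j) (\<zeta> j x) + (\<Sum>i\<in>I. scaleC (c i) (\<zeta> i x))) \<in> S2"
    using insert by (intro S2_add S2_scale) auto
  thus ?case using insert by simp
qed

lemma A_zero:
  assumes sa: "selfadjoint_on_S2 A"
  shows "A (\<lambda>x. 0) = (\<lambda>x. 0)"
proof -
  have "A (\<lambda>x. scaleC 0 ((\<lambda>x::'h. 0::'h) x)) = (\<lambda>x. scaleC 0 (A (\<lambda>x. 0) x))"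
    by (rule sa_scale[OF sa S2_zero])
  thus ?thesis by simp
qed

lemma A_lincomb:
  assumes sa: "selfadjoint_on_S2 A" and "finite I" "\<And>i. i \<in> I \<Longrightarrow> (\<zeta> i::'h\<Rightarrow>'h) \<in> S2"
  shows "A (\<lambda>x. \<Sum>i\<in>I. scaleC (c i) (\<zeta> i x)) = (\<lambda>x. \<Sum>i\<in>I. scaleC (c i) (A (\<zeta> i) x))"
  using assms(2,3)
proof (induction I rule: finite_induct)
  case empty thus ?case using A_zero[OF sa] by simp
next
  case (insert j I)
  have j: "\<zeta> j \<in> S2" using insert by auto
  have r: "(\<lambda>x. \<Sum>i\<in>I. scaleC (c i) (\<zeta> i x)) \<in> S2" using insert by (intro S2_lincomb) auto
  have jc: "(\<lambda>x. scaleC (c j) (\<zeta> j x)) \<in> S2" using S2_scale[OF j] .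
  have add: "A (\<lambda>x. (\<lambda>x. scaleC (c j) (\<zeta> j x)) x + (\<lambda>x. \<Sum>i\<in>I. scaleC (c i) (\<zeta> i x)) x)
      = (\<lambda>x. A (\<lambda>x. scaleC (c j) (\<zeta> j x)) x + A (\<lambda>x. \<Sum>i\<in>I. scaleC (c i) (\<zeta> i x)) x)"
    by (rule sa_add[OF sa jc r])
  have sc: "A (\<lambda>x. scaleC (c j) (\<zeta> j x)) = (\<lambda>x. scaleC (c j) (A (\<zeta> j) x))"
    by (rule sa_scale[OF sa j])
  show ?case using insert add sc by simp
qed

end


lemma cnj_cinner[simp]: "cnj (cinner x y) = cinner y (x::'a::complex_inner)"
  by (metis cinner_commute)

definition Sop :: "complex \<Rightarrow> 'a::complex_inner \<Rightarrow> 'a \<Rightarrow> 'a \<Rightarrow> 'a" where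
  "Sop \<alpha> u v = (\<lambda>x. scaleC \<alpha> (Rk u v x) + scaleC (cnj \<alpha>) (Rk v u x))"

lemma Sop_selfadjoint: "selfadjoint_op (Sop \<alpha> u v)"
  unfolding selfadjoint_op_def
proof
  show "bounded_clinear_op (Sop \<alpha> u v)" unfolding Sop_def
    by (intro bclin_add_fun bclin_scale_fun bclin_Rk)
  show "\<forall>x y. cinner (Sop \<alpha> u v x) y = cinner x (Sop \<alpha> u v y)"
    by (simp add: Sop_def Rk_def cinner_add_left cinner_add_right cinner_scaleC_left cinner_scaleC_right
        algebra_simps)
qed

lemma Rk_add: "Rk u v (x + y) = Rk u v x + Rk u v y"
  by (rule bclin_add[OF bclin_Rk])
lemma Rk_scaleC: "Rk u v (scaleC c x) = scaleC c (Rk u v x)"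
  by (rule bclin_scaleC[OF bclin_Rk])

lemma sop_expand:
  assumes eta: "bounded_clinear_op \<eta>"
  shows "Sop \<alpha> u v (\<eta> (Sop \<beta> w z x)) =
     scaleC (\<alpha>*\<beta>) (Rk u v (\<eta> (Rk w z x))) + scaleC (\<alpha> * cnj \<beta>) (Rk u v (\<eta> (Rk z w x)))
   + scaleC (cnj \<alpha> * \<beta>) (Rk v u (\<eta> (Rk w z x))) + scaleC (cnj \<alpha> * cnj \<beta>) (Rk v u (\<eta> (Rk z w x)))"
  unfolding Sop_def
  by (simp add: bclin_add[OF eta] bclin_scaleC[OF eta] Rk_add Rk_scaleC scaleC_add_right scaleC_scaleC add_ac)

lemma lin4_add:
  fixes a1 a2 a3 a4 :: "'a::complex_vector"
  shows "(scaleC s1 a1 + scaleC s2 a2 + scaleC s3 a3 + scaleC s4 a4) +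
         (scaleC t1 a1 + scaleC t2 a2 + scaleC t3 a3 + scaleC t4 a4) =
         scaleC (s1+t1) a1 + scaleC (s2+t2) a2 + scaleC (s3+t3) a3 + scaleC (s4+t4) a4"
  by (simp add: scaleC_add_left add_ac)

lemma sop_pair:
  assumes eta: "bounded_clinear_op \<eta>"
  shows "Sop \<alpha> u v (\<eta> (Sop \<beta> w z x)) + Sop (-\<i>*\<alpha>) u v (\<eta> (Sop (\<i>*\<beta>) w z x)) =
     scaleC (2*\<alpha>*\<beta>) (Rk u v (\<eta> (Rk w z x))) + scaleC (2 * cnj \<alpha> * cnj \<beta>) (Rk v u (\<eta> (Rk z w x)))"
proof -
  have "Sop \<alpha> u v (\<eta> (Sop \<beta> w z x)) + Sop (-\<i>*\<alpha>) u v (\<eta> (Sop (\<i>*\<beta>) w z x)) =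
     scaleC (\<alpha>*\<beta> + (-\<i>*\<alpha>)*(\<i>*\<beta>)) (Rk u v (\<eta> (Rk w z x)))
   + scaleC (\<alpha> * cnj \<beta> + (-\<i>*\<alpha>) * cnj (\<i>*\<beta>)) (Rk u v (\<eta> (Rk z w x)))
   + scaleC (cnj \<alpha> * \<beta> + cnj (-\<i>*\<alpha>) * (\<i>*\<beta>)) (Rk v u (\<eta> (Rk w z x)))
   + scaleC (cnj \<alpha> * cnj \<beta> + cnj (-\<i>*\<alpha>) * cnj (\<i>*\<beta>)) (Rk v u (\<eta> (Rk z w x)))"
    unfolding sop_expand[OF eta] by (rule lin4_add)
  also have "\<alpha>*\<beta> + (-\<i>*\<alpha>)*(\<i>*\<beta>) = 2*\<alpha>*\<beta>" by (simp add: algebra_simps)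
  also have "\<alpha> * cnj \<beta> + (-\<i>*\<alpha>) * cnj (\<i>*\<beta>) = 0" by (simp add: algebra_simps)
  also have "cnj \<alpha> * \<beta> + cnj (-\<i>*\<alpha>) * (\<i>*\<beta>) = 0" by (simp add: algebra_simps)
  also have "cnj \<alpha> * cnj \<beta> + cnj (-\<i>*\<alpha>) * cnj (\<i>*\<beta>) = 2 * cnj \<alpha> * cnj \<beta>" by (simp add: algebra_simps)
  finally show ?thesis by simp
qed


definition cf :: "(('a::complex_inner \<Rightarrow> 'a) \<Rightarrow> ('a \<Rightarrow> 'a)) \<Rightarrow> ('a \<times> 'a) \<times> ('a \<times> 'a) \<Rightarrow> complex" where
  "cf A t = cinner (fst (fst t)) (A (Rk (fst (snd t)) (snd (snd t))) (snd (fst t)))"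
definition Xf :: "('a::complex_inner \<Rightarrow> 'a) \<Rightarrow> ('a \<times> 'a) \<times> ('a \<times> 'a) \<Rightarrow> 'a \<Rightarrow> 'a" where
  "Xf \<eta> t x = Rk (fst (fst t)) (fst (snd t)) (\<eta> (Rk (snd (snd t)) (snd (fst t)) x))"
definition tsw :: "('a \<times> 'a) \<times> ('a \<times> 'a) \<Rightarrow> ('a \<times> 'a) \<times> ('a \<times> 'a)" where
  "tsw t = (snd t, fst t)"
definition tv :: "complex \<times> 'a \<times> 'a \<times> complex \<times> 'a \<times> 'a \<Rightarrow> ('a::complex_inner \<Rightarrow> 'a) \<Rightarrow> 'a \<Rightarrow> 'a" where
  "tv \<tau> \<eta> x = (case \<tau> of (\<alpha>,u,v,\<beta>,w,z) \<Rightarrow> Sop \<alpha> u v (\<eta> (Sop \<beta> w z x)))"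
definition tau1 :: "(('a::complex_inner \<Rightarrow> 'a) \<Rightarrow> ('a \<Rightarrow> 'a)) \<Rightarrow> ('a \<times> 'a) \<times> ('a \<times> 'a) \<Rightarrow> complex \<times> 'a \<times> 'a \<times> complex \<times> 'a \<times> 'a" where
  "tau1 A t = (cf A t / 4, fst (fst t), fst (snd t), 1, snd (snd t), snd (fst t))"
definition tau2 :: "(('a::complex_inner \<Rightarrow> 'a) \<Rightarrow> ('a \<Rightarrow> 'a)) \<Rightarrow> ('a \<times> 'a) \<times> ('a \<times> 'a) \<Rightarrow> complex \<times> 'a \<times> 'a \<times> complex \<times> 'a \<times> 'a" where
  "tau2 A t = (-\<i> * (cf A t / 4), fst (fst t), fst (snd t), \<i>, snd (snd t), snd (fst t))"

lemma pair_tv: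
  assumes eta: "bounded_clinear_op \<eta>"
  shows "tv (tau1 A t) \<eta> x + tv (tau2 A t) \<eta> x =
         scaleC (cf A t / 2) (Xf \<eta> t x) + scaleC (cnj (cf A t) / 2) (Xf \<eta> (tsw t) x)"
proof -
  have "tv (tau1 A t) \<eta> x + tv (tau2 A t) \<eta> x =
     scaleC (2*(cf A t / 4)*1) (Xf \<eta> t x) + scaleC (2 * cnj (cf A t / 4) * cnj 1) (Xf \<eta> (tsw t) x)"
    unfolding tv_def tau1_def tau2_def Xf_def tsw_def
    using sop_pair[OF eta, of "cf A t / 4" "fst (fst t)" "fst (snd t)" 1 "snd (snd t)" "snd (fst t)" x]
    by simp
  thus ?thesis by simp
qed

lemma QN_expand:
  assumes z: "bounded_clinear_op \<zeta>"
  shows "QN E N \<zeta> x = (\<Sum>p\<in>exh E N \<times> exh E N. scaleC (cinner (fst p) (\<zeta> (snd p))) (Rk (fst p) (snd p) x))"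
proof -
  let ?S = "exh E N"
  have "QN E N \<zeta> x = (\<Sum>i\<in>?S. scaleC (cinner i (\<Sum>j\<in>?S. scaleC (cinner j x) (\<zeta> j))) i)"
    unfolding QN_def pN_def by (simp add: bclin_sum[OF z])
  also have "\<dots> = (\<Sum>i\<in>?S. \<Sum>j\<in>?S. scaleC (cinner i (\<zeta> j)) (Rk i j x))"
    by (simp add: cinner_sum_right cinner_scaleC_right scaleC_sum_left Rk_def scaleC_scaleC mult.commute)
  also have "\<dots> = (\<Sum>p\<in>?S \<times> ?S. scaleC (cinner (fst p) (\<zeta> (snd p))) (Rk (fst p) (snd p) x))"
    by (simp add: sum.cartesian_product case_prod_beta)
  finally show ?thesis .
qed

lemma Xf_eq:
  assumes eta: "bounded_clinear_op \<eta>"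
  shows "Xf \<eta> ((i,j),(k,l)) x = scaleC (cinner j x * cinner k (\<eta> l)) i"
  unfolding Xf_def Rk_def by (simp add: bclin_scaleC[OF eta] cinner_scaleC_right)

context
  fixes A :: "('h::chilbert_space \<Rightarrow> 'h) \<Rightarrow> ('h \<Rightarrow> 'h)"
  assumes sep: "separable_space TYPE('h)" and ex: "\<exists>E::'h set. orthonormal_basis E"
    and sa: "selfadjoint_on_S2 A"
begin

lemma cf_sym:
  assumes "i \<in> E0" "j \<in> E0" "k \<in> E0" "l \<in> E0"
  shows "cf A (tsw ((i,j),(k,l))) = cnj (cf A ((i,j),(k,l)))"
proof -
  have o: "orthonormal_basis (E0::'h set)" by (rule onb0[OF sep ex])
  have "cf A (tsw ((i,j),(k,l))) = hs_inner (Rk k l) (A (Rk i j))"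
    unfolding cf_def tsw_def using hs_inner_Rk[OF o assms(3,4)] by simp
  also have "\<dots> = hs_inner (A (Rk k l)) (Rk i j)"
    using sa_sym[OF sa S2_Rk[OF sep ex] S2_Rk[OF sep ex]] by simp
  also have "\<dots> = cnj (hs_inner (Rk i j) (A (Rk k l)))" by (rule hs_inner_cnj)
  also have "hs_inner (Rk i j) (A (Rk k l)) = cf A ((i,j),(k,l))"
    unfolding cf_def using hs_inner_Rk[OF o assms(1,2)] by simp
  finally show ?thesis .
qed

lemma TN_expand:
  assumes eta: "\<eta> \<in> S2"
  shows "QN E0 N (A (QN E0 N \<eta>)) x =
    (\<Sum>t\<in>(exh E0 N \<times> exh E0 N) \<times> (exh E0 N \<times> exh E0 N). scaleC (cf A t) (Xf \<eta> t x))"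
proof -
  let ?S = "exh (E0::'h set) N"
  have bl: "bounded_clinear_op \<eta>" using eta S2_iff[OF sep ex] by blast
  have q: "QN E0 N \<eta> = (\<lambda>x. \<Sum>q\<in>?S \<times> ?S. scaleC (cinner (fst q) (\<eta> (snd q))) (Rk (fst q) (snd q) x))"
    using QN_expand[OF bl] by (intro ext) simp
  have Aq: "A (QN E0 N \<eta>) = (\<lambda>x. \<Sum>q\<in>?S \<times> ?S. scaleC (cinner (fst q) (\<eta> (snd q))) (A (Rk (fst q) (snd q)) x))"
    unfolding q by (rule A_lincomb[OF sep ex sa]) (auto intro: S2_Rk[OF sep ex])
  have qS2: "QN E0 N \<eta> \<in> S2" unfolding q by (rule S2_lincomb[OF sep ex]) (auto intro: S2_Rk[OF sep ex])
  have bz: "bounded_clinear_op (A (QN E0 N \<eta>))"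
    using sa_S2[OF sa qS2] S2_iff[OF sep ex] by blast
  have "QN E0 N (A (QN E0 N \<eta>)) x =
     (\<Sum>p\<in>?S \<times> ?S. scaleC (cinner (fst p) (A (QN E0 N \<eta>) (snd p))) (Rk (fst p) (snd p) x))"
    by (rule QN_expand[OF bz])
  also have "\<dots> = (\<Sum>p\<in>?S \<times> ?S. \<Sum>q\<in>?S \<times> ?S. scaleC (cf A (p,q)) (Xf \<eta> (p,q) x))"
  proof (rule sum.cong[OF refl])
    fix p :: "'h \<times> 'h"
    obtain i j where p: "p = (i,j)" by (cases p)
    have "scaleC (cinner (fst p) (A (QN E0 N \<eta>) (snd p))) (Rk (fst p) (snd p) x)
        = scaleC (\<Sum>q\<in>?S \<times> ?S. cinner (fst q) (\<eta> (snd q)) * cf A (p,q)) (Rk i j x)"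
      unfolding Aq p cf_def by (simp add: cinner_sum_right cinner_scaleC_right)
    also have "\<dots> = (\<Sum>q\<in>?S \<times> ?S. scaleC (cf A (p,q)) (Xf \<eta> (p,q) x))"
      unfolding scaleC_sum_left
    proof (rule sum.cong[OF refl])
      fix q :: "'h \<times> 'h"
      obtain k l where qq: "q = (k,l)" by (cases q)
      show "scaleC (cinner (fst q) (\<eta> (snd q)) * cf A (p, q)) (Rk i j x) = scaleC (cf A (p, q)) (Xf \<eta> (p, q) x)"
        unfolding qq p Xf_eq[OF bl] by (simp add: Rk_def scaleC_scaleC mult_ac)
    qed
    finally show "scaleC (cinner (fst p) (A (QN E0 N \<eta>) (snd p))) (Rk (fst p) (snd p) x)
        = (\<Sum>q\<in>?S \<times> ?S. scaleC (cf A (p,q)) (Xf \<eta> (p,q) x))" .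
  qed
  also have "\<dots> = (\<Sum>t\<in>(?S \<times> ?S) \<times> (?S \<times> ?S). scaleC (cf A t) (Xf \<eta> t x))"
    by (simp add: sum.cartesian_product)
  finally show ?thesis .
qed

lemma TN_sym:
  assumes eta: "bounded_clinear_op \<eta>"
  shows "(\<Sum>t\<in>(exh E0 N \<times> exh E0 N) \<times> (exh E0 N \<times> exh E0 N). tv (tau1 A t) \<eta> x + tv (tau2 A t) \<eta> x)
       = (\<Sum>t\<in>(exh E0 N \<times> exh E0 N) \<times> (exh E0 N \<times> exh E0 N). scaleC (cf A t) (Xf \<eta> t x))"
proof -
  let ?S = "exh (E0::'h set) N"
  let ?P = "(?S \<times> ?S) \<times> (?S \<times> ?S)"
  have PE: "t \<in> ?P \<Longrightarrow> fst (fst t) \<in> E0 \<and> snd (fst t) \<in> E0 \<and> fst (snd t) \<in> E0 \<and> snd (snd t) \<in> E0" for t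
    using exh_subset[of E0 N] by auto
  have "(\<Sum>t\<in>?P. tv (tau1 A t) \<eta> x + tv (tau2 A t) \<eta> x)
      = (\<Sum>t\<in>?P. scaleC (cf A t / 2) (Xf \<eta> t x)) + (\<Sum>t\<in>?P. scaleC (cnj (cf A t) / 2) (Xf \<eta> (tsw t) x))"
    by (simp add: pair_tv[OF eta] sum.distrib)
  also have "(\<Sum>t\<in>?P. scaleC (cnj (cf A t) / 2) (Xf \<eta> (tsw t) x)) = (\<Sum>t\<in>?P. scaleC (cf A (tsw t) / 2) (Xf \<eta> (tsw t) x))"
  proof (rule sum.cong[OF refl])
    fix t assume "t \<in> ?P"
    then obtain i j k l where t: "t = ((i,j),(k,l))" "i \<in> E0" "j \<in> E0" "k \<in> E0" "l \<in> E0"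
      using PE by (metis prod.collapse)
    show "scaleC (cnj (cf A t) / 2) (Xf \<eta> (tsw t) x) = scaleC (cf A (tsw t) / 2) (Xf \<eta> (tsw t) x)"
      using cf_sym[OF t(2-5)] t(1) by simp
  qed
  also have "\<dots> = (\<Sum>t\<in>?P. scaleC (cf A t / 2) (Xf \<eta> t x))"
    by (rule sum.reindex_bij_witness[of _ tsw tsw]) (auto simp: tsw_def)
  also have "(\<Sum>t\<in>?P. scaleC (cf A t / 2) (Xf \<eta> t x)) + (\<Sum>t\<in>?P. scaleC (cf A t / 2) (Xf \<eta> t x))
      = (\<Sum>t\<in>?P. scaleC (cf A t) (Xf \<eta> t x))"
  proof -
    have h: "(z::complex) / 2 + z / 2 = z" for z by simp
    show ?thesis by (simp only: sum.distrib[symmetric] scaleC_add_left[symmetric] h)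
  qed
  finally show ?thesis .
qed

end


lemma onb_norm1:
  assumes "orthonormal_basis E" "e \<in> E"
  shows "norm (e::'a::complex_inner) = 1"
proof -
  have "(norm e)^2 = 1" using onb_inner[OF assms assms(2)] by (simp add: norm_sq_cinner)
  thus ?thesis using norm_ge_zero[of e] by (auto simp: power2_eq_1_iff)
qed

lemma norm_le_nrm:
  assumes "\<eta> \<in> HSV E" "c \<in> E"
  shows "norm (\<eta> c) \<le> nrm E \<eta>"
proof -
  have "sum (\<lambda>e. (norm (\<eta> e))^2) {c} \<le> infsum (\<lambda>e. (norm (\<eta> e))^2) E"
    by (rule finite_sum_le_infsum) (use assms in \<open>auto simp: HSV_def\<close>)
  hence "sqrt ((norm (\<eta> c))^2) \<le> nrm E \<eta>" unfolding nrm_def by (simp add: real_sqrt_le_mono del: real_sqrt_abs)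
  thus ?thesis by simp
qed

lemma comp_bound:
  fixes E :: "'a::chilbert_space set"
  assumes onb: "orthonormal_basis E" and cE: "countable E" and eta: "bounded_clinear_op \<eta>" "\<eta> \<in> HSV E"
    and abcd: "a \<in> E" "b \<in> E" "c \<in> E" "d \<in> E"
  shows "(\<lambda>x. scaleC \<gamma> (Rk a b (\<eta> (Rk c d x)))) \<in> HSV E \<and>
         nrm E (\<lambda>x. scaleC \<gamma> (Rk a b (\<eta> (Rk c d x)))) \<le> cmod \<gamma> * nrm E \<eta>"
proof -
  have eq: "(\<lambda>x. scaleC \<gamma> (Rk a b (\<eta> (Rk c d x)))) = (\<lambda>x. scaleC \<gamma> (Rk (Rk a b (\<eta> c)) d x))"
    by (simp add: Rk_def bclin_scaleC[OF eta(1)] Rk_scaleC[unfolded Rk_def])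
  have R: "Rk (Rk a b (\<eta> c)) d \<in> HSV E" "nrm E (Rk (Rk a b (\<eta> c)) d) = norm (Rk a b (\<eta> c)) * norm d"
    using Rk_HSV[OF onb cE] by auto
  have "norm (Rk a b (\<eta> c)) = cmod (cinner b (\<eta> c)) * norm a" unfolding Rk_def by (simp add: norm_scaleC)
  also have "\<dots> \<le> (norm b * norm (\<eta> c)) * norm a" by (rule mult_right_mono[OF cauchy_schwarz]) simp
  also have "\<dots> = norm (\<eta> c)" using onb_norm1[OF onb] abcd by simp
  also have "\<dots> \<le> nrm E \<eta>" by (rule norm_le_nrm[OF eta(2) abcd(3)])
  finally have nb: "norm (Rk a b (\<eta> c)) \<le> nrm E \<eta>" .
  show ?thesis unfolding eq
    using HSV_scaleC[OF R(1), of \<gamma>] R(2) onb_norm1[OF onb abcd(4)] nb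
    by (simp add: mult_left_mono)
qed

definition bnd1 :: "complex \<times> 'a \<times> 'a \<times> complex \<times> 'a \<times> 'a \<Rightarrow> real" where
  "bnd1 \<tau> = (case \<tau> of (\<alpha>,u,v,\<beta>,w,z) \<Rightarrow> 4 * cmod \<alpha> * cmod \<beta>)"
definition inE :: "'a set \<Rightarrow> complex \<times> 'a \<times> 'a \<times> complex \<times> 'a \<times> 'a \<Rightarrow> bool" where
  "inE E \<tau> = (case \<tau> of (\<alpha>,u,v,\<beta>,w,z) \<Rightarrow> u \<in> E \<and> v \<in> E \<and> w \<in> E \<and> z \<in> E)"

lemma bnd1_nonneg: "bnd1 \<tau> \<ge> 0"
  unfolding bnd1_def by (cases \<tau>) auto

lemma tv_bound:
  fixes E :: "'a::chilbert_space set"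
  assumes onb: "orthonormal_basis E" and cE: "countable E" and eta: "bounded_clinear_op \<eta>" "\<eta> \<in> HSV E"
    and t: "inE E \<tau>"
  shows "(\<lambda>x. tv \<tau> \<eta> x) \<in> HSV E \<and> nrm E (\<lambda>x. tv \<tau> \<eta> x) \<le> bnd1 \<tau> * nrm E \<eta>"
proof -
  obtain \<alpha> u v \<beta> w z where tau: "\<tau> = (\<alpha>,u,v,\<beta>,w,z)" by (cases \<tau>)
  have uvwz: "u \<in> E" "v \<in> E" "w \<in> E" "z \<in> E" using t unfolding tau inE_def by auto
  define f1 where "f1 = (\<lambda>x. scaleC (\<alpha>*\<beta>) (Rk u v (\<eta> (Rk w z x))))"
  define f2 where "f2 = (\<lambda>x. scaleC (\<alpha> * cnj \<beta>) (Rk u v (\<eta> (Rk z w x))))"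
  define f3 where "f3 = (\<lambda>x. scaleC (cnj \<alpha> * \<beta>) (Rk v u (\<eta> (Rk w z x))))"
  define f4 where "f4 = (\<lambda>x. scaleC (cnj \<alpha> * cnj \<beta>) (Rk v u (\<eta> (Rk z w x))))"
  have eq: "(\<lambda>x. tv \<tau> \<eta> x) = (\<lambda>x. f1 x + f2 x + f3 x + f4 x)"
    unfolding tau tv_def f1_def f2_def f3_def f4_def by (simp add: sop_expand[OF eta(1)])
  have b1: "f1 \<in> HSV E \<and> nrm E f1 \<le> cmod \<alpha> * cmod \<beta> * nrm E \<eta>"
    unfolding f1_def using comp_bound[OF onb cE eta uvwz(1,2,3,4), of "\<alpha>*\<beta>"] by (simp add: norm_mult)
  have b2: "f2 \<in> HSV E \<and> nrm E f2 \<le> cmod \<alpha> * cmod \<beta> * nrm E \<eta>"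
    unfolding f2_def using comp_bound[OF onb cE eta uvwz(1,2,4,3), of "\<alpha> * cnj \<beta>"] by (simp add: norm_mult)
  have b3: "f3 \<in> HSV E \<and> nrm E f3 \<le> cmod \<alpha> * cmod \<beta> * nrm E \<eta>"
    unfolding f3_def using comp_bound[OF onb cE eta uvwz(2,1,3,4), of "cnj \<alpha> * \<beta>"] by (simp add: norm_mult)
  have b4: "f4 \<in> HSV E \<and> nrm E f4 \<le> cmod \<alpha> * cmod \<beta> * nrm E \<eta>"
    unfolding f4_def using comp_bound[OF onb cE eta uvwz(2,1,4,3), of "cnj \<alpha> * cnj \<beta>"] by (simp add: norm_mult)
  have s12: "(\<lambda>x. f1 x + f2 x) \<in> HSV E" "nrm E (\<lambda>x. f1 x + f2 x) \<le> nrm E f1 + nrm E f2"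
    using HSV_add b1 b2 by blast+
  have s123: "(\<lambda>x. f1 x + f2 x + f3 x) \<in> HSV E" "nrm E (\<lambda>x. f1 x + f2 x + f3 x) \<le> nrm E (\<lambda>x. f1 x + f2 x) + nrm E f3"
    using HSV_add[OF s12(1), of f3] b3 by auto
  have s1234: "(\<lambda>x. f1 x + f2 x + f3 x + f4 x) \<in> HSV E" "nrm E (\<lambda>x. f1 x + f2 x + f3 x + f4 x) \<le> nrm E (\<lambda>x. f1 x + f2 x + f3 x) + nrm E f4"
    using HSV_add[OF s123(1), of f4] b4 by auto
  show ?thesis unfolding eq
    using s1234 s123(2) s12(2) b1 b2 b3 b4 by (simp add: bnd1_def tau)
qed

definition ev :: "(complex \<times> 'a \<times> 'a \<times> complex \<times> 'a \<times> 'a) list \<Rightarrow> ('a::complex_inner \<Rightarrow> 'a) \<Rightarrow> 'a \<Rightarrow> 'a" where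
  "ev xs \<eta> x = sum_list (map (\<lambda>\<tau>. tv \<tau> \<eta> x) xs)"

lemma ev_Nil[simp]: "ev [] \<eta> x = 0" unfolding ev_def by simp
lemma ev_Cons[simp]: "ev (\<tau> # xs) \<eta> x = tv \<tau> \<eta> x + ev xs \<eta> x" unfolding ev_def by simp
lemma ev_append[simp]: "ev (xs @ ys) \<eta> x = ev xs \<eta> x + ev ys \<eta> x" unfolding ev_def by simp

lemma ev_bound:
  fixes E :: "'a::chilbert_space set"
  assumes onb: "orthonormal_basis E" and cE: "countable E" and eta: "bounded_clinear_op \<eta>" "\<eta> \<in> HSV E"
  shows "(\<forall>\<tau>\<in>set xs. inE E \<tau>) \<Longrightarrow>
    (\<lambda>x. ev xs \<eta> x) \<in> HSV E \<and> nrm E (\<lambda>x. ev xs \<eta> x) \<le> sum_list (map bnd1 xs) * nrm E \<eta>"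
proof (induction xs)
  case Nil thus ?case by (simp add: HSV_def nrm_def)
next
  case (Cons \<tau> xs)
  have h: "(\<lambda>x. ev xs \<eta> x) \<in> HSV E" "nrm E (\<lambda>x. ev xs \<eta> x) \<le> sum_list (map bnd1 xs) * nrm E \<eta>"
    using Cons by auto
  have t: "(\<lambda>x. tv \<tau> \<eta> x) \<in> HSV E" "nrm E (\<lambda>x. tv \<tau> \<eta> x) \<le> bnd1 \<tau> * nrm E \<eta>"
    using tv_bound[OF onb cE eta] Cons.prems by auto
  have "(\<lambda>x. tv \<tau> \<eta> x + ev xs \<eta> x) \<in> HSV E" "nrm E (\<lambda>x. tv \<tau> \<eta> x + ev xs \<eta> x) \<le> nrm E (\<lambda>x. tv \<tau> \<eta> x) + nrm E (\<lambda>x. ev xs \<eta> x)"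
    using HSV_add[OF t(1) h(1)] by auto
  thus ?case using t(2) h(2) by (simp add: distrib_right)
qed

definition scl :: "real \<Rightarrow> complex \<times> 'a \<times> 'a \<times> complex \<times> 'a \<times> 'a \<Rightarrow> complex \<times> 'a \<times> 'a \<times> complex \<times> 'a \<times> 'a" where
  "scl r \<tau> = (case \<tau> of (\<alpha>,u,v,\<beta>,w,z) \<Rightarrow> (of_real r * \<alpha>,u,v,\<beta>,w,z))"

lemma Sop_scale: "Sop (of_real r * \<alpha>) u v y = scaleC (of_real r) (Sop \<alpha> u v y)"
  unfolding Sop_def by (simp add: scaleC_add_right scaleC_scaleC)

lemma tv_scl: "tv (scl r \<tau>) \<eta> x = scaleC (of_real r) (tv \<tau> \<eta> x)"
  unfolding scl_def tv_def by (cases \<tau>) (simp add: Sop_scale)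

lemma ev_scl: "ev (map (scl r) xs) \<eta> x = scaleC (of_real r) (ev xs \<eta> x)"
  by (induction xs) (simp_all add: tv_scl scaleC_add_right)

lemma inE_scl: "inE E (scl r \<tau>) = inE E \<tau>"
  unfolding scl_def inE_def by (cases \<tau>) simp

lemma bnd1_scl: "bnd1 (scl r \<tau>) = \<bar>r\<bar> * bnd1 \<tau>"
  unfolding scl_def bnd1_def by (cases \<tau>) (simp add: norm_mult)

lemma ev_rep: "ev (concat (replicate k xs)) \<eta> x = scaleC (of_nat k) (ev xs \<eta> x)"
proof (induction k)
  case 0 thus ?case by simp
next
  case (Suc k) thus ?case by (simp add: scaleC_add_left scaleC_one add.commute)
qed

lemma take_concat_rep:
  assumes "r < length xs" "k < M"
  shows "take (k * length xs + r) (concat (replicate M xs)) = concat (replicate k xs) @ take r xs"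
  using assms
proof (induction k arbitrary: M)
  case 0
  then obtain M' where "M = Suc M'" by (cases M) auto
  thus ?case using 0 by simp
next
  case (Suc k)
  then obtain M' where M: "M = Suc M'" by (cases M) auto
  have "take (Suc k * length xs + r) (concat (replicate M xs)) =
        xs @ take (k * length xs + r) (concat (replicate M' xs))"
    unfolding M by (simp add: add.assoc)
  also have "\<dots> = xs @ concat (replicate k xs) @ take r xs" using Suc M by simp
  finally show ?case by simp
qed


definition TT :: "(('a::complex_inner \<Rightarrow> 'a) \<Rightarrow> ('a \<Rightarrow> 'a)) \<Rightarrow> nat \<Rightarrow> ('a \<Rightarrow> 'a) \<Rightarrow> 'a \<Rightarrow> 'a" where
  "TT A N \<eta> = QN E0 N (A (QN E0 N \<eta>))"

lemma TT_0: "TT A 0 \<eta> x = 0"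
  unfolding TT_def QN_def pN_def exh_def by simp

context
  fixes A :: "('h::chilbert_space \<Rightarrow> 'h) \<Rightarrow> ('h \<Rightarrow> 'h)"
  assumes sep: "separable_space TYPE('h)" and ex: "\<exists>E::'h set. orthonormal_basis E"
    and sa: "selfadjoint_on_S2 A"
begin

lemma S2_diff: "(\<zeta>::'h\<Rightarrow>'h) \<in> S2 \<Longrightarrow> \<xi> \<in> S2 \<Longrightarrow> (\<lambda>x. \<zeta> x - \<xi> x) \<in> S2"
  using S2_add[OF sep ex, of \<zeta> "\<lambda>x. scaleC (-1) (\<xi> x)"] S2_scale[OF sep ex, of \<xi> "-1"]
  by (simp add: scaleC_minus_left scaleC_one)

lemma QN_S2: "(\<zeta>::'h\<Rightarrow>'h) \<in> S2 \<Longrightarrow> QN E0 N \<zeta> \<in> S2"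
proof -
  assume z: "\<zeta> \<in> S2"
  hence bl: "bounded_clinear_op \<zeta>" using S2_iff[OF sep ex] by blast
  have q: "QN E0 N \<zeta> = (\<lambda>x. \<Sum>q\<in>exh E0 N \<times> exh E0 N. scaleC (cinner (fst q) (\<zeta> (snd q))) (Rk (fst q) (snd q) x))"
    using QN_expand[OF bl] by (intro ext) simp
  show ?thesis unfolding q by (rule S2_lincomb[OF sep ex]) (auto intro: S2_Rk[OF sep ex])
qed

lemma S2_nrm: "(\<zeta>::'h\<Rightarrow>'h) \<in> S2 \<Longrightarrow> hs_norm \<zeta> = nrm E0 \<zeta>"
  using S2_iff[OF sep ex] hs_norm_nrm by blast

lemma TN_conv:
  assumes eta: "\<eta> \<in> S2"
  shows "(\<lambda>N. nrm E0 (\<lambda>x. TT A N \<eta> x - A \<eta> x)) \<longlonglongrightarrow> 0"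
proof -
  have o: "orthonormal_basis (E0::'h set)" by (rule onb0[OF sep ex])
  have c: "countable (E0::'h set)" by (rule cE0[OF sep ex])
  obtain K where K: "K \<ge> 0" "\<And>\<zeta>. \<zeta> \<in> S2 \<Longrightarrow> hs_norm (A \<zeta>) \<le> K * hs_norm \<zeta>"
    using sa_bound[OF sep ex sa] by blast
  have eb: "bounded_clinear_op \<eta>" "\<eta> \<in> HSV E0" using eta S2_iff[OF sep ex] by auto
  have AS: "A \<eta> \<in> S2" by (rule sa_S2[OF sa eta])
  have ab: "bounded_clinear_op (A \<eta>)" "A \<eta> \<in> HSV E0" using AS S2_iff[OF sep ex] by auto
  define d where "d N = (\<lambda>y. QN E0 N \<eta> y - \<eta> y)" for N
  have dS2: "d N \<in> S2" for N unfolding d_def by (rule S2_diff[OF QN_S2[OF eta] eta])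
  have AdS2: "A (d N) \<in> S2" for N by (rule sa_S2[OF sa dS2])
  have Adb: "bounded_clinear_op (A (d N))" "A (d N) \<in> HSV E0" for N using AdS2 S2_iff[OF sep ex] by auto
  have Aq: "A (QN E0 N \<eta>) = (\<lambda>x. A (d N) x + A \<eta> x)" for N
  proof -
    have "(\<lambda>x. d N x + \<eta> x) = QN E0 N \<eta>" unfolding d_def by simp
    thus ?thesis using sa_add[OF sa dS2 eta, of N] by simp
  qed
  have split: "TT A N \<eta> x - A \<eta> x = QN E0 N (A (d N)) x + (QN E0 N (A \<eta>) x - A \<eta> x)" for N x
    unfolding TT_def Aq unfolding QN_def by (simp add: pN_add)
  have QAd: "QN E0 N (A (d N)) \<in> HSV E0" "nrm E0 (QN E0 N (A (d N))) \<le> nrm E0 (A (d N))" for N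
    using QN_HSV[OF o Adb] by auto
  have r2: "(\<lambda>x. QN E0 N (A \<eta>) x - A \<eta> x) \<in> HSV E0" for N
    by (rule HSV_diff(1)[OF QN_HSV(1)[OF o ab] ab(2)])
  have bound: "nrm E0 (\<lambda>x. TT A N \<eta> x - A \<eta> x) \<le>
      K * nrm E0 (\<lambda>y. QN E0 N \<eta> y - \<eta> y) + nrm E0 (\<lambda>x. QN E0 N (A \<eta>) x - A \<eta> x)" for N
  proof -
    have "nrm E0 (\<lambda>x. TT A N \<eta> x - A \<eta> x) = nrm E0 (\<lambda>x. QN E0 N (A (d N)) x + (QN E0 N (A \<eta>) x - A \<eta> x))"
      by (simp only: split)
    also have "\<dots> \<le> nrm E0 (QN E0 N (A (d N))) + nrm E0 (\<lambda>x. QN E0 N (A \<eta>) x - A \<eta> x)"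
      using HSV_add(2)[OF QAd(1) r2] by simp
    also have "nrm E0 (QN E0 N (A (d N))) \<le> nrm E0 (A (d N))" by (rule QAd(2))
    also have "nrm E0 (A (d N)) = hs_norm (A (d N))" using S2_nrm[OF AdS2] by simp
    also have "\<dots> \<le> K * hs_norm (d N)" by (rule K(2)[OF dS2])
    also have "hs_norm (d N) = nrm E0 (\<lambda>y. QN E0 N \<eta> y - \<eta> y)" using S2_nrm[OF dS2] unfolding d_def by simp
    finally show ?thesis by simp
  qed
  have l1: "(\<lambda>N. nrm E0 (\<lambda>y. QN E0 N \<eta> y - \<eta> y)) \<longlonglongrightarrow> 0" by (rule QN_conv[OF o c eb])
  have l2: "(\<lambda>N. nrm E0 (\<lambda>x. QN E0 N (A \<eta>) x - A \<eta> x)) \<longlonglongrightarrow> 0" by (rule QN_conv[OF o c ab])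
  have l3: "(\<lambda>N. K * nrm E0 (\<lambda>y. QN E0 N \<eta> y - \<eta> y) + nrm E0 (\<lambda>x. QN E0 N (A \<eta>) x - A \<eta> x)) \<longlonglongrightarrow> K * 0 + 0"
    by (intro tendsto_add tendsto_mult l1 l2 tendsto_const)
  show ?thesis
  proof (rule tendsto_sandwich[where f = "\<lambda>_. 0"])
    show "eventually (\<lambda>N. 0 \<le> nrm E0 (\<lambda>x. TT A N \<eta> x - A \<eta> x)) sequentially"
      by (rule always_eventually) (simp add: nrm_nonneg)
    show "eventually (\<lambda>N. nrm E0 (\<lambda>x. TT A N \<eta> x - A \<eta> x) \<le>
      K * nrm E0 (\<lambda>y. QN E0 N \<eta> y - \<eta> y) + nrm E0 (\<lambda>x. QN E0 N (A \<eta>) x - A \<eta> x)) sequentially"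
      by (rule always_eventually) (simp add: bound)
    show "(\<lambda>N. 0::real) \<longlonglongrightarrow> 0" by simp
    show "(\<lambda>N. K * nrm E0 (\<lambda>y. QN E0 N \<eta> y - \<eta> y) + nrm E0 (\<lambda>x. QN E0 N (A \<eta>) x - A \<eta> x)) \<longlonglongrightarrow> 0"
      using l3 by simp
  qed
qed

end


definition Pset :: "nat \<Rightarrow> (('a::complex_inner \<times> 'a) \<times> ('a \<times> 'a)) set" where
  "Pset N = (exh E0 N \<times> exh E0 N) \<times> (exh E0 N \<times> exh E0 N)"
definition lstN :: "nat \<Rightarrow> (('a::complex_inner \<times> 'a) \<times> ('a \<times> 'a)) list" where
  "lstN N = (SOME xs. set xs = Pset N \<and> distinct xs)"
definition termsT where
  "termsT A N = concat (map (\<lambda>t. [tau1 A t, tau2 A t]) (lstN N))"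
definition dmy :: "complex \<times> 'a::complex_inner \<times> 'a \<times> complex \<times> 'a \<times> 'a" where
  "dmy = (0, SOME e. e \<in> E0, SOME e. e \<in> E0, 0, SOME e. e \<in> E0, SOME e. e \<in> E0)"
definition Bk where
  "Bk A N = dmy # (termsT A (Suc N) @ map (scl (-1)) (termsT A N))"
definition bb where
  "bb A N = sum_list (map bnd1 (Bk A N))"
definition Mk where
  "Mk A N = Suc N * (nat (ceiling (bb A N)) + 1)"
definition blk where
  "blk A N = concat (replicate (Mk A N) (map (scl (1 / real (Mk A N))) (Bk A N)))"
definition Lpre where
  "Lpre A n = concat (map (blk A) [0..<n])"
definition ts where
  "ts A n = Lpre A (Suc n) ! n"

lemma lstN: "set (lstN N :: (('a::complex_inner \<times> 'a) \<times> ('a \<times> 'a)) list) = Pset N \<and> distinct (lstN N :: (('a \<times> 'a) \<times> ('a \<times> 'a)) list)"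
proof -
  have "finite (Pset N :: (('a \<times> 'a) \<times> ('a \<times> 'a)) set)" unfolding Pset_def by simp
  from someI_ex[OF finite_distinct_list[OF this]] show ?thesis unfolding lstN_def .
qed

lemma ev_concat2:
  "ev (concat (map (\<lambda>t. [f t, g t]) xs)) \<eta> x = sum_list (map (\<lambda>t. tv (f t) \<eta> x + tv (g t) \<eta> x) xs)"
  by (induction xs) (simp_all add: add.assoc)

lemma ev_termsT: "ev (termsT A N) \<eta> x = (\<Sum>t\<in>Pset N. tv (tau1 A t) \<eta> x + tv (tau2 A t) \<eta> x)"
proof -
  have d: "distinct (lstN N)" and st: "set (lstN N) = Pset N" using lstN[of N] by auto
  show ?thesis unfolding termsT_def ev_concat2 sum_list_distinct_conv_sum_set[OF d] st ..
qed

lemma Sop_0: "Sop 0 u v y = 0" unfolding Sop_def by simp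
lemma tv_dmy: "tv dmy \<eta> x = 0" unfolding dmy_def tv_def by (simp add: Sop_0)

lemma Mk_pos: "Mk A N > 0" unfolding Mk_def by simp
lemma Bk_len: "length (Bk A N) \<ge> 1" unfolding Bk_def by simp
lemma blk_len: "length (blk A N) = Mk A N * length (Bk A N)"
  unfolding blk_def by (simp add: length_concat sum_list_replicate)
lemma blk_len1: "length (blk A N) \<ge> 1"
  unfolding blk_len using Mk_pos[of A N] Bk_len[of A N] by (simp add: Suc_le_eq)
lemma Lpre_Suc: "Lpre A (Suc n) = Lpre A n @ blk A n" unfolding Lpre_def by simp
lemma Lpre_0: "Lpre A 0 = []" unfolding Lpre_def by simp
lemma Lpre_len: "length (Lpre A n) \<ge> n"
  by (induction n) (auto simp: Lpre_Suc Lpre_0 intro: order_trans[OF _ add_left_mono[OF blk_len1]])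
lemma Lpre_prefix: "n \<le> m \<Longrightarrow> \<exists>ys. Lpre A m = Lpre A n @ ys"
proof (induction m rule: dec_induct)
  case base thus ?case by simp
next
  case (step m) thus ?case by (auto simp: Lpre_Suc)
qed
lemma Lpre_len_mono: "n \<le> m \<Longrightarrow> length (Lpre A n) \<le> length (Lpre A m)"
  using Lpre_prefix[of n m A] by auto

lemma ts_nth:
  assumes "k < length (Lpre A m)"
  shows "ts A k = Lpre A m ! k"
proof (cases "Suc k \<le> m")
  case True
  then obtain ys where "Lpre A m = Lpre A (Suc k) @ ys" using Lpre_prefix by blast
  moreover have "k < length (Lpre A (Suc k))" using Lpre_len[of "Suc k" A] by simp
  ultimately show ?thesis unfolding ts_def by (simp add: nth_append)
next
  case False
  hence "m \<le> Suc k" by simp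
  then obtain ys where "Lpre A (Suc k) = Lpre A m @ ys" using Lpre_prefix by blast
  thus ?thesis unfolding ts_def using assms by (simp add: nth_append)
qed

lemma ev_take_sum: "N \<le> length xs \<Longrightarrow> ev (take N xs) \<eta> x = (\<Sum>n<N. tv (xs ! n) \<eta> x)"
proof (induction N)
  case 0 thus ?case by simp
next
  case (Suc N)
  hence "N < length xs" by simp
  hence "take (Suc N) xs = take N xs @ [xs ! N]" by (rule take_Suc_conv_app_nth)
  thus ?case using Suc by (simp add: add.commute)
qed

lemma sum_ts:
  assumes "N \<le> length (Lpre A m)"
  shows "(\<Sum>n<N. tv (ts A n) \<eta> x) = ev (take N (Lpre A m)) \<eta> x"
proof -
  have "(\<Sum>n<N. tv (ts A n) \<eta> x) = (\<Sum>n<N. tv (Lpre A m ! n) \<eta> x)"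
  proof (rule sum.cong[OF refl])
    fix n assume "n \<in> {..<N}"
    hence "n < length (Lpre A m)" using assms by simp
    thus "tv (ts A n) \<eta> x = tv (Lpre A m ! n) \<eta> x" using ts_nth by metis
  qed
  also have "\<dots> = ev (take N (Lpre A m)) \<eta> x" using ev_take_sum[OF assms] by simp
  finally show ?thesis .
qed

lemma ev_blk: "ev (blk A N) \<eta> x = ev (Bk A N) \<eta> x"
proof -
  have M: "real (Mk A N) > 0" using Mk_pos[of A N] by simp
  have "ev (blk A N) \<eta> x = scaleC (of_nat (Mk A N)) (scaleC (of_real (1 / real (Mk A N))) (ev (Bk A N) \<eta> x))"
    unfolding blk_def ev_rep ev_scl ..
  also have "\<dots> = ev (Bk A N) \<eta> x"
    using M by (simp add: scaleC_scaleC scaleC_one)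
  finally show ?thesis .
qed

lemma bnd_take: "sum_list (map bnd1 (take r xs)) \<le> sum_list (map bnd1 xs)"
proof -
  have "sum_list (map bnd1 xs) = sum_list (map bnd1 (take r xs)) + sum_list (map bnd1 (drop r xs))"
    by (metis append_take_drop_id map_append sum_list_append)
  moreover have "sum_list (map bnd1 (drop r xs)) \<ge> 0" by (rule sum_list_nonneg) (auto simp: bnd1_nonneg)
  ultimately show ?thesis by simp
qed

lemma bb_nonneg: "bb A N \<ge> 0"
  unfolding bb_def by (rule sum_list_nonneg) (auto simp: bnd1_nonneg)

lemma Mk_big: "real (Mk A N) \<ge> real (Suc N) * (bb A N + 1)"
proof -
  have "real (nat (ceiling (bb A N))) \<ge> bb A N" by linarith
  hence h: "real (nat (ceiling (bb A N)) + 1) \<ge> bb A N + 1" by simp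
  have "real (Mk A N) = real (Suc N) * real (nat (ceiling (bb A N)) + 1)"
    unfolding Mk_def by (simp only: of_nat_mult)
  thus ?thesis using mult_left_mono[OF h, of "real (Suc N)"] by simp
qed

lemma bb_over_Mk: "bb A N / real (Mk A N) \<le> 1 / real (Suc N)"
proof -
  have b0: "bb A N \<ge> 0" by (rule bb_nonneg)
  have M: "real (Mk A N) > 0" using Mk_pos[of A N] by simp
  have "bb A N * real (Suc N) \<le> real (Suc N) * (bb A N + 1)" by (simp add: algebra_simps)
  also have "\<dots> \<le> real (Mk A N)" by (rule Mk_big)
  finally show ?thesis using M by (simp add: field_simps)
qed


context
  fixes A :: "('h::chilbert_space \<Rightarrow> 'h) \<Rightarrow> ('h \<Rightarrow> 'h)"
  assumes sep: "separable_space TYPE('h)" and ex: "\<exists>E::'h set. orthonormal_basis E"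
    and sa: "selfadjoint_on_S2 A" and ne: "(E0::'h set) \<noteq> {}"
begin

lemma dmy_inE: "inE E0 (dmy :: complex \<times> 'h \<times> 'h \<times> complex \<times> 'h \<times> 'h)"
proof -
  have "(SOME e. e \<in> (E0::'h set)) \<in> E0" using ne by (simp add: some_in_eq)
  thus ?thesis unfolding dmy_def inE_def by simp
qed

lemma termsT_inE: "\<tau> \<in> set (termsT A N) \<Longrightarrow> inE E0 \<tau>"
proof -
  assume "\<tau> \<in> set (termsT A N)"
  then obtain t where t: "t \<in> set (lstN N)" "\<tau> = tau1 A t \<or> \<tau> = tau2 A t"
    unfolding termsT_def by auto
  hence "t \<in> Pset N" using lstN by blast
  hence "fst (fst t) \<in> E0 \<and> snd (fst t) \<in> E0 \<and> fst (snd t) \<in> E0 \<and> snd (snd t) \<in> E0"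
    unfolding Pset_def using exh_subset[of "E0::'h set" N] by auto
  thus "inE E0 \<tau>" using t(2) unfolding inE_def tau1_def tau2_def by auto
qed

lemma Bk_inE: "\<forall>\<tau>\<in>set (Bk A N). inE E0 \<tau>"
  unfolding Bk_def using dmy_inE termsT_inE by (auto simp: inE_scl)

lemma ev_termsT_TT:
  assumes "\<eta> \<in> S2"
  shows "ev (termsT A N) \<eta> x = TT A N \<eta> x"
proof -
  have bl: "bounded_clinear_op \<eta>" using assms S2_iff[OF sep ex] by blast
  show ?thesis unfolding ev_termsT Pset_def TT_def TN_sym[OF sep ex sa bl] TN_expand[OF sep ex sa assms] ..
qed

lemma ev_Bk:
  assumes "\<eta> \<in> S2"
  shows "ev (Bk A N) \<eta> x = TT A (Suc N) \<eta> x - TT A N \<eta> x"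
  unfolding Bk_def using ev_termsT_TT[OF assms]
  by (simp add: tv_dmy ev_scl scaleC_minus_left scaleC_one)

lemma ev_Lpre:
  assumes "\<eta> \<in> S2"
  shows "ev (Lpre A m) \<eta> x = TT A m \<eta> x"
  by (induction m) (simp_all add: Lpre_0 TT_0 Lpre_Suc ev_blk ev_Bk[OF assms])

lemma TT_S2: "\<eta> \<in> S2 \<Longrightarrow> TT A m \<eta> \<in> S2"
  unfolding TT_def by (intro QN_S2[OF sep ex sa] sa_S2[OF sa])

lemma mN_prop:
  fixes N :: nat
  defines "mN \<equiv> (LEAST m. N < length (Lpre A (Suc m)))"
  shows "length (Lpre A mN) \<le> N \<and> N < length (Lpre A (Suc mN))"
proof -
  have exm: "N < length (Lpre A (Suc N))" using Lpre_len[of "Suc N" A] by simp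
  have up: "N < length (Lpre A (Suc mN))" unfolding mN_def by (rule LeastI[where P="\<lambda>m. N < length (Lpre A (Suc m))" and k=N, OF exm])
  have lo: "length (Lpre A mN) \<le> N"
  proof (cases mN)
    case 0 thus ?thesis by (simp add: Lpre_0)
  next
    case (Suc k)
    hence "k < mN" by simp
    hence "\<not> N < length (Lpre A (Suc k))" unfolding mN_def by (rule not_less_Least)
    thus ?thesis using Suc by simp
  qed
  show ?thesis using up lo by simp
qed

lemma mN_tends: "filterlim (\<lambda>N. LEAST m. N < length (Lpre A (Suc m))) at_top sequentially"
  unfolding filterlim_at_top eventually_sequentially
proof (intro allI exI allI impI)
  fix Z N assume N: "length (Lpre A Z) \<le> N"
  define m where "m = (LEAST m. N < length (Lpre A (Suc m)))"
  have "N < length (Lpre A (Suc m))" using mN_prop[of N] unfolding m_def by simp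
  show "Z \<le> (LEAST m. N < length (Lpre A (Suc m)))"
  proof (rule ccontr)
    assume "\<not> Z \<le> (LEAST m. N < length (Lpre A (Suc m)))"
    hence "Suc m \<le> Z" unfolding m_def by simp
    hence "length (Lpre A (Suc m)) \<le> length (Lpre A Z)" by (rule Lpre_len_mono)
    thus False using N \<open>N < length (Lpre A (Suc m))\<close> by simp
  qed
qed

end


context
  fixes A :: "('h::chilbert_space \<Rightarrow> 'h) \<Rightarrow> ('h \<Rightarrow> 'h)"
  assumes sep: "separable_space TYPE('h)" and ex: "\<exists>E::'h set. orthonormal_basis E"
    and sa: "selfadjoint_on_S2 A" and ne: "(E0::'h set) \<noteq> {}"
begin

lemma main_bound:
  assumes eta: "\<eta> \<in> S2"
  defines "e \<equiv> \<lambda>m. nrm E0 (\<lambda>x. TT A m \<eta> x - A \<eta> x)"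
  shows "(\<lambda>x. (\<Sum>n<N. tv (ts A n) \<eta> x) - A \<eta> x) \<in> HSV E0 \<and>
         nrm E0 (\<lambda>x. (\<Sum>n<N. tv (ts A n) \<eta> x) - A \<eta> x)
           \<le> 2 * e (LEAST m. N < length (Lpre A (Suc m))) + e (Suc (LEAST m. N < length (Lpre A (Suc m))))
             + nrm E0 \<eta> / real (Suc (LEAST m. N < length (Lpre A (Suc m))))"
proof -
  have o: "orthonormal_basis (E0::'h set)" by (rule onb0[OF sep ex])
  have c: "countable (E0::'h set)" by (rule cE0[OF sep ex])
  have eb: "bounded_clinear_op \<eta>" "\<eta> \<in> HSV E0" using eta S2_iff[OF sep ex] by auto
  define m where "m = (LEAST m. N < length (Lpre A (Suc m)))"
  have mp: "length (Lpre A m) \<le> N" "N < length (Lpre A (Suc m))"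
    using mN_prop[OF sep ex sa ne, of N] unfolding m_def by auto
  define q where "q = N - length (Lpre A m)"
  define B where "B = Bk A m"
  define L where "L = length B"
  define M where "M = Mk A m"
  define xs where "xs = map (scl (1 / real M)) B"
  define k where "k = q div L"
  define r where "r = q mod L"
  have L1: "L \<ge> 1" unfolding L_def B_def by (rule Bk_len)
  have M0: "M > 0" unfolding M_def by (rule Mk_pos)
  have qlt: "q < M * L"
    using mp unfolding q_def M_def L_def B_def by (simp add: Lpre_Suc blk_len)
  have qkr: "q = k * L + r" unfolding k_def r_def by simp
  have kM: "k < M" using qlt L1 unfolding k_def by (simp add: div_less_iff_less_mult mult.commute)
  have rL: "r < L" using L1 unfolding r_def by simp
  have lxs: "length xs = L" unfolding xs_def L_def by simp
  have tk: "take N (Lpre A (Suc m)) = Lpre A m @ (concat (replicate k xs) @ take r xs)"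
  proof -
    have "take N (Lpre A (Suc m)) = Lpre A m @ take q (blk A m)"
      unfolding Lpre_Suc q_def using mp(1) by simp
    also have "blk A m = concat (replicate M xs)" unfolding blk_def xs_def M_def B_def ..
    also have "take q (concat (replicate M xs)) = concat (replicate k xs) @ take r xs"
      unfolding qkr lxs[symmetric] by (rule take_concat_rep) (use rL kM lxs in auto)
    finally show ?thesis .
  qed
  define R where "R = (\<lambda>x. ev (take r B) \<eta> x)"
  define \<theta> where "\<theta> = real k / real M"
  define D where "D j = (\<lambda>x. TT A j \<eta> x - A \<eta> x)" for j
  have PN: "(\<Sum>n<N. tv (ts A n) \<eta> x) = TT A m \<eta> x + scaleC (of_real \<theta>) (TT A (Suc m) \<eta> x - TT A m \<eta> x)
        + scaleC (of_real (1 / real M)) (R x)" for x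
  proof -
    have "(\<Sum>n<N. tv (ts A n) \<eta> x) = ev (take N (Lpre A (Suc m))) \<eta> x"
      by (rule sum_ts) (use mp in simp)
    also have "\<dots> = TT A m \<eta> x + (scaleC (of_nat k) (scaleC (of_real (1 / real M)) (ev B \<eta> x))
        + scaleC (of_real (1 / real M)) (ev (take r B) \<eta> x))"
      unfolding tk by (simp add: ev_Lpre[OF sep ex sa ne eta] ev_rep xs_def ev_scl take_map)
    also have "scaleC (of_nat k) (scaleC (of_real (1 / real M)) (ev B \<eta> x)) = scaleC (of_real \<theta>) (ev B \<eta> x)"
      unfolding \<theta>_def by (simp add: scaleC_scaleC)
    also have "ev B \<eta> x = TT A (Suc m) \<eta> x - TT A m \<eta> x" unfolding B_def by (rule ev_Bk[OF sep ex sa ne eta])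
    finally show ?thesis unfolding R_def by (simp add: add.assoc)
  qed
  have eq: "(\<lambda>x. (\<Sum>n<N. tv (ts A n) \<eta> x) - A \<eta> x) =
     (\<lambda>x. (D m x + scaleC (of_real \<theta>) (D (Suc m) x - D m x)) + scaleC (of_real (1 / real M)) (R x))"
    unfolding PN D_def by (simp add: algebra_simps)
  have DH: "D j \<in> HSV E0" for j
  proof -
    have "(\<lambda>x. TT A j \<eta> x - A \<eta> x) \<in> S2" by (rule S2_diff[OF sep ex sa TT_S2[OF sep ex sa ne eta] sa_S2[OF sa eta]])
    thus ?thesis unfolding D_def using S2_iff[OF sep ex] by blast
  qed
  have De: "nrm E0 (D j) = e j" for j unfolding D_def e_def ..
  have Rb: "R \<in> HSV E0" "nrm E0 R \<le> sum_list (map bnd1 (take r B)) * nrm E0 \<eta>"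
  proof -
    have "\<forall>\<tau>\<in>set (take r B). inE E0 \<tau>" using Bk_inE[OF sep ex sa ne, of m] unfolding B_def
      by (meson in_set_takeD)
    from ev_bound[OF o c eb this] show "R \<in> HSV E0" "nrm E0 R \<le> sum_list (map bnd1 (take r B)) * nrm E0 \<eta>"
      unfolding R_def by auto
  qed
  have th: "0 \<le> \<theta>" "\<theta> \<le> 1" unfolding \<theta>_def using kM M0 by auto
  have d1: "(\<lambda>x. D (Suc m) x - D m x) \<in> HSV E0" "nrm E0 (\<lambda>x. D (Suc m) x - D m x) \<le> e (Suc m) + e m"
    using HSV_diff[OF DH DH, of "Suc m" m] De by auto
  have d2: "(\<lambda>x. scaleC (of_real \<theta>) (D (Suc m) x - D m x)) \<in> HSV E0"
    "nrm E0 (\<lambda>x. scaleC (of_real \<theta>) (D (Suc m) x - D m x)) \<le> e (Suc m) + e m"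
  proof -
    show "(\<lambda>x. scaleC (of_real \<theta>) (D (Suc m) x - D m x)) \<in> HSV E0" using HSV_scaleC(1)[OF d1(1)] .
    have "nrm E0 (\<lambda>x. scaleC (of_real \<theta>) (D (Suc m) x - D m x)) = \<theta> * nrm E0 (\<lambda>x. D (Suc m) x - D m x)"
      using HSV_scaleC(2)[OF d1(1), of "of_real \<theta>"] th by simp
    also have "\<dots> \<le> 1 * (e (Suc m) + e m)"
      using d1(2) th nrm_nonneg by (intro mult_mono) auto
    finally show "nrm E0 (\<lambda>x. scaleC (of_real \<theta>) (D (Suc m) x - D m x)) \<le> e (Suc m) + e m" by simp
  qed
  have d3: "(\<lambda>x. scaleC (of_real (1 / real M)) (R x)) \<in> HSV E0"
    "nrm E0 (\<lambda>x. scaleC (of_real (1 / real M)) (R x)) \<le> nrm E0 \<eta> / real (Suc m)"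
  proof -
    show "(\<lambda>x. scaleC (of_real (1 / real M)) (R x)) \<in> HSV E0" using HSV_scaleC(1)[OF Rb(1)] .
    have "nrm E0 (\<lambda>x. scaleC (of_real (1 / real M)) (R x)) = nrm E0 R / real M"
      using HSV_scaleC(2)[OF Rb(1), of "of_real (1 / real M)"] M0 by (simp add: norm_divide)
    also have "\<dots> \<le> (sum_list (map bnd1 (take r B)) * nrm E0 \<eta>) / real M"
      using Rb(2) M0 by (simp add: divide_right_mono)
    also have "\<dots> \<le> (bb A m * nrm E0 \<eta>) / real M"
      using bnd_take[of r B] nrm_nonneg[of E0 \<eta>] M0 unfolding bb_def B_def
      by (intro divide_right_mono mult_right_mono) auto
    also have "\<dots> = (bb A m / real M) * nrm E0 \<eta>" by simp
    also have "\<dots> \<le> (1 / real (Suc m)) * nrm E0 \<eta>"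
      using bb_over_Mk[of A m] nrm_nonneg[of E0 \<eta>] unfolding M_def by (intro mult_right_mono) auto
    finally show "nrm E0 (\<lambda>x. scaleC (of_real (1 / real M)) (R x)) \<le> nrm E0 \<eta> / real (Suc m)" by simp
  qed
  have s1: "(\<lambda>x. D m x + scaleC (of_real \<theta>) (D (Suc m) x - D m x)) \<in> HSV E0"
    "nrm E0 (\<lambda>x. D m x + scaleC (of_real \<theta>) (D (Suc m) x - D m x)) \<le> e m + (e (Suc m) + e m)"
    using HSV_add[OF DH d2(1), of m] d2(2) De by auto
  have s2: "(\<lambda>x. (D m x + scaleC (of_real \<theta>) (D (Suc m) x - D m x)) + scaleC (of_real (1 / real M)) (R x)) \<in> HSV E0"
    "nrm E0 (\<lambda>x. (D m x + scaleC (of_real \<theta>) (D (Suc m) x - D m x)) + scaleC (of_real (1 / real M)) (R x))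
       \<le> e m + (e (Suc m) + e m) + nrm E0 \<eta> / real (Suc m)"
    using HSV_add[OF s1(1) d3(1)] s1(2) d3(2) by auto
  show ?thesis unfolding eq m_def[symmetric] using s2 by simp
qed

lemma main_conv:
  assumes eta: "\<eta> \<in> S2"
  shows "(\<lambda>N. hs_norm (\<lambda>x. (\<Sum>n<N. tv (ts A n) \<eta> x) - A \<eta> x)) \<longlonglongrightarrow> 0"
proof -
  define e where "e = (\<lambda>m. nrm E0 (\<lambda>x. TT A m \<eta> x - A \<eta> x))"
  define g where "g m = 2 * e m + e (Suc m) + nrm E0 \<eta> / real (Suc m)" for m
  have el: "e \<longlonglongrightarrow> 0" unfolding e_def by (rule TN_conv[OF sep ex sa eta])
  have gl: "g \<longlonglongrightarrow> 0"
  proof -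
    have "(\<lambda>m. e (Suc m)) \<longlonglongrightarrow> 0" using el by (rule LIMSEQ_Suc)
    moreover have "(\<lambda>m. nrm E0 \<eta> / real (Suc m)) \<longlonglongrightarrow> 0"
      using LIMSEQ_Suc[OF lim_const_over_n[of "nrm E0 \<eta>"]] by simp
    ultimately have "(\<lambda>m. 2 * e m + e (Suc m) + nrm E0 \<eta> / real (Suc m)) \<longlonglongrightarrow> 2 * 0 + 0 + 0"
      using el by (intro tendsto_add tendsto_mult tendsto_const) auto
    thus ?thesis unfolding g_def by simp
  qed
  have gm: "(\<lambda>N. g (LEAST m. N < length (Lpre A (Suc m)))) \<longlonglongrightarrow> 0"
    by (rule filterlim_compose[OF gl mN_tends[OF sep ex sa ne]])
  have b: "hs_norm (\<lambda>x. (\<Sum>n<N. tv (ts A n) \<eta> x) - A \<eta> x) \<le> g (LEAST m. N < length (Lpre A (Suc m)))"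
    "hs_norm (\<lambda>x. (\<Sum>n<N. tv (ts A n) \<eta> x) - A \<eta> x) \<ge> 0" for N
  proof -
    have mb: "(\<lambda>x. (\<Sum>n<N. tv (ts A n) \<eta> x) - A \<eta> x) \<in> HSV E0"
      "nrm E0 (\<lambda>x. (\<Sum>n<N. tv (ts A n) \<eta> x) - A \<eta> x) \<le> g (LEAST m. N < length (Lpre A (Suc m)))"
      using main_bound[OF eta, of N] unfolding g_def e_def by auto
    show "hs_norm (\<lambda>x. (\<Sum>n<N. tv (ts A n) \<eta> x) - A \<eta> x) \<le> g (LEAST m. N < length (Lpre A (Suc m)))"
      using hs_norm_nrm[OF mb(1)] mb(2) by simp
    show "hs_norm (\<lambda>x. (\<Sum>n<N. tv (ts A n) \<eta> x) - A \<eta> x) \<ge> 0"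
      using hs_norm_nrm[OF mb(1)] nrm_nonneg by simp
  qed
  show ?thesis
  proof (rule tendsto_sandwich[where f = "\<lambda>_. 0"])
    show "eventually (\<lambda>N. 0 \<le> hs_norm (\<lambda>x. (\<Sum>n<N. tv (ts A n) \<eta> x) - A \<eta> x)) sequentially"
      by (rule always_eventually) (simp add: b(2))
    show "eventually (\<lambda>N. hs_norm (\<lambda>x. (\<Sum>n<N. tv (ts A n) \<eta> x) - A \<eta> x) \<le> g (LEAST m. N < length (Lpre A (Suc m)))) sequentially"
      by (rule always_eventually) (simp add: b(1))
  qed (use gm in auto)
qed

end


theorem theorem3p9:
  fixes A :: "('h::chilbert_space \<Rightarrow> 'h) \<Rightarrow> ('h \<Rightarrow> 'h)"
  assumes "separable_space TYPE('h)"
    and "selfadjoint_on_S2 A"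
  shows "\<exists>a b :: nat \<Rightarrow> 'h \<Rightarrow> 'h.
           (\<forall>n. selfadjoint_op (a n) \<and> selfadjoint_op (b n)) \<and>
           (\<forall>\<eta>\<in>S2. (\<lambda>N. hs_norm (\<lambda>x. (\<Sum>n<N. a n (\<eta> (b n x))) - A \<eta> x))
                        \<longlonglongrightarrow> 0)"
proof (cases "\<exists>E::'h set. orthonormal_basis E")
  case False
  have "S2 = ({} :: ('h \<Rightarrow> 'h) set)" using False unfolding S2_def hilbert_schmidt_def by auto
  thus ?thesis using Sop_selfadjoint by (intro exI[of _ "\<lambda>n. Sop 0 0 0"]) auto
next
  case ex: True
  show ?thesis
  proof (cases "(E0::'h set) = {}")
    case True
    have "hs_norm (f::'h \<Rightarrow> 'h) = 0" for f
      unfolding hs_norm_def hs_inner_def E0_def[symmetric] True by simp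
    thus ?thesis using Sop_selfadjoint by (intro exI[of _ "\<lambda>n. Sop 0 0 0"]) auto
  next
    case ne: False
    define a where "a n = (case ts A n of (\<alpha>,u,v,\<beta>,w,z) \<Rightarrow> Sop \<alpha> u v)" for n
    define b where "b n = (case ts A n of (\<alpha>,u,v,\<beta>,w,z) \<Rightarrow> Sop \<beta> w z)" for n
    have sa_ab: "selfadjoint_op (a n) \<and> selfadjoint_op (b n)" for n
      unfolding a_def b_def by (cases "ts A n") (simp add: Sop_selfadjoint)
    have ab: "a n (\<eta> (b n x)) = tv (ts A n) \<eta> x" for n \<eta> x
      unfolding a_def b_def tv_def by (cases "ts A n") simp
    have "\<forall>\<eta>\<in>S2. (\<lambda>N. hs_norm (\<lambda>x. (\<Sum>n<N. a n (\<eta> (b n x))) - A \<eta> x)) \<longlonglongrightarrow> 0"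
      unfolding ab using main_conv[OF assms(1) ex assms(2) ne] by blast
    thus ?thesis using sa_ab by blast
  qed
qed


end
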